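(* Let $X:[0,\infty)\times\mathbb R^d\times\Omega\to\mathbb R$, $x_0\in\mathbb R^d$, $T>0$, and suppose there are $A_T>0$, $p>d+1$, $\gamma\in(0,1)$, $\beta\in(0,1)$ such that for all $x,y\in\mathbb R^d$, $t,s\in[0,T]$: $$\mathbb E|X(0,x_0)|^p\le A_T,\quad \mathbb E|X(t,x)-X(t,y)|^p\le A_T|x-y|^{\gamma p},\quad \mathbb E|X(t,x)-X(s,x)|^p\le A_T|t-s|^{\beta p}.$$ If $p\gamma>d+1$, $p\beta>d+1$ and $\theta>\frac{p\gamma}{p-(d+1)}$, then there is a constant $C=C_{p,d,\gamma,\beta,\theta}$ (not depending on $X$, $A_T$, $x_0$) such that ($X$ has a continuous modification on $[0,T]\times\mathbb R^d$ which satisfies) $$\mathbb E\Big|\sup_{t\in[0,T]}\sup_{x\in\mathbb R^d}\frac{|X(t,x)|}{1+|x-x_0|^\theta}\Big|^p\le CA_T,\qquad \mathbb P\Big(\lim_{|x|\to\infty}\sup_{t\in[0,T]}\frac{|X(t,x)|}{1+|x-x_0|^\theta}=0\Big)=1.$$ Hence $X\in C_{x_0,\theta}([0,T]\times\mathbb R^d)$ almost surely.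
   Context: $C_{x_0,\theta}([0,T]\times\mathbb R^d)$ is the space of continuous $\psi:[0,T]\times\mathbb R^d\to\mathbb R$ with $\lim_{|x|\to\infty}\sup_{t\in[0,T]}|\psi(t,x)|/(1+|x-x_0|^\theta)=0$, normed by $\sup_{t\in[0,T]}\sup_x|\psi(t,x)|/(1+|x-x_0|^\theta)$. *)

theory Defs
  imports "HOL-Probability.Probability"
begin

end

theory Submission
  imports Defs
begin

definition grid :: "nat \<Rightarrow> 'e::euclidean_space set" where
  "grid n = {u. \<forall>b\<in>Basis. \<exists>k::nat. k \<le> 2^n \<and> u \<bullet> b = real k / 2^n}"

definition trn :: "nat \<Rightarrow> 'e::euclidean_space \<Rightarrow> 'e" where
  "trn n u = (\<Sum>b\<in>Basis. (of_int \<lfloor>2^n * (u \<bullet> b)\<rfloor> / 2^n) *\<^sub>R b)"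

definition unitc :: "'e::euclidean_space set" where
  "unitc = {u. \<forall>b\<in>Basis. 0 \<le> u \<bullet> b \<and> u \<bullet> b \<le> 1}"

definition idx :: "nat \<Rightarrow> ('e::euclidean_space \<times> 'e) set" where
  "idx n = {(u,b). u \<in> grid n \<and> b \<in> Basis \<and> u + (1/2^n) *\<^sub>R b \<in> grid n}"

definition Mx :: "nat \<Rightarrow> ('e::euclidean_space \<Rightarrow> real) \<Rightarrow> real" where
  "Mx n f = Max (insert 0 ((\<lambda>(u,b). \<bar>f (u + (1/2^n) *\<^sub>R b) - f u\<bar>) ` idx n))"

lemma grid_sub: "grid (n::nat) \<subseteq> (\<lambda>g. \<Sum>b\<in>Basis. (real (g b) / 2^n) *\<^sub>R b) ` (Pi\<^sub>E Basis (\<lambda>_. {..(2::nat)^n}))"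
proof
  fix u :: "'e::euclidean_space" assume u: "u \<in> grid n"
  then have "\<forall>b\<in>Basis. \<exists>k::nat. k \<le> 2^n \<and> u \<bullet> b = real k / 2^n" by (simp add: grid_def)
  then obtain g where g: "\<And>b. b\<in>Basis \<Longrightarrow> g b \<le> 2^n \<and> u \<bullet> b = real (g b) / 2^n" by metis
  define g' where "g' = restrict g Basis"
  have "g' \<in> Pi\<^sub>E Basis (\<lambda>_. {..(2::nat)^n})" using g by (auto simp: g'_def)
  moreover have "u = (\<Sum>b\<in>Basis. (real (g' b) / 2^n) *\<^sub>R b)"
    by (subst euclidean_representation[symmetric, of u]) (auto intro!: sum.cong simp: g g'_def)
  ultimately show "u \<in> (\<lambda>g. \<Sum>b\<in>Basis. (real (g b) / 2^n) *\<^sub>R b) ` (Pi\<^sub>E Basis (\<lambda>_. {..(2::nat)^n}))"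
    by blast
qed

lemma finite_grid: "finite (grid n :: 'e::euclidean_space set)"
  by (rule finite_subset[OF grid_sub]) (auto intro!: finite_PiE)

lemma card_grid: "card (grid n :: 'e::euclidean_space set) \<le> (2^n+1)^DIM('e)"
proof -
  have "card (grid n :: 'e set) \<le> card ((\<lambda>g. \<Sum>b\<in>Basis. (real (g b) / 2^n) *\<^sub>R (b::'e)) ` (Pi\<^sub>E Basis (\<lambda>_. {..(2::nat)^n})))"
    by (rule card_mono[OF _ grid_sub]) (auto intro!: finite_PiE)
  also have "\<dots> \<le> card (Pi\<^sub>E (Basis::'e set) (\<lambda>_. {..(2::nat)^n}))" by (rule card_image_le) (auto intro!: finite_PiE)
  also have "\<dots> = (2^n+1)^DIM('e)" by (simp add: card_PiE)
  finally show ?thesis .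
qed

lemma finite_idx: "finite (idx n :: ('e::euclidean_space \<times> 'e) set)"
  by (rule finite_subset[of _ "grid n \<times> Basis"]) (auto simp: idx_def finite_grid)

lemma card_idx: "card (idx n :: ('e::euclidean_space \<times> 'e) set) \<le> (2^n+1)^DIM('e) * DIM('e)"
proof -
  have sub: "(idx n :: ('e \<times> 'e) set) \<subseteq> (grid n :: 'e set) \<times> (Basis::'e set)" by (auto simp: idx_def)
  have "card (idx n :: ('e \<times> 'e) set) \<le> card ((grid n :: 'e set) \<times> (Basis::'e set))"
    using card_mono[OF _ sub] finite_grid[of n, where 'e='e] by (metis finite_Basis finite_cartesian_product)
  also have "\<dots> \<le> (2^n+1)^DIM('e) * DIM('e)" using card_grid[where 'e='e, of n] by (simp add: card_cartesian_product)
  finally show ?thesis .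
qed

lemma Mx_ge: "(u,b) \<in> idx n \<Longrightarrow> \<bar>f (u + (1/2^n) *\<^sub>R b) - f u\<bar> \<le> Mx n f"
  unfolding Mx_def by (rule Max_ge) (auto simp: finite_idx)

lemma Mx_nonneg: "0 \<le> Mx n f"
  unfolding Mx_def by (rule Max_ge) (auto simp: finite_idx)

lemma grid_mono: assumes "m \<le> n" shows "grid m \<subseteq> grid n"
proof
  fix u :: "'e::euclidean_space" assume u: "u \<in> grid m"
  show "u \<in> grid n" unfolding grid_def
  proof (intro CollectI ballI)
    fix b :: 'e assume b: "b \<in> Basis"
    obtain k::nat where k: "k \<le> 2^m" "u \<bullet> b = real k / 2^m" using u b by (auto simp: grid_def)
    have e: "(2::real)^n = 2^m * 2^(n-m)" using assms by (simp add: power_add[symmetric])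
    have "k * 2^(n-m) \<le> (2::nat)^m * 2^(n-m)" using k by simp
    also have "\<dots> = 2^n" using assms by (simp add: power_add[symmetric])
    finally show "\<exists>k::nat. k \<le> 2^n \<and> u \<bullet> b = real k / 2^n"
      using k by (intro exI[of _ "k * 2^(n-m)"]) (simp add: e)
  qed
qed

lemma trn_inner: "b \<in> Basis \<Longrightarrow> trn n u \<bullet> b = of_int \<lfloor>2^n * (u \<bullet> b)\<rfloor> / 2^n"
  by (simp add: trn_def inner_sum_left_Basis)

lemma trn_grid: assumes "(u::'e::euclidean_space) \<in> unitc" shows "trn n u \<in> grid n"
  unfolding grid_def
proof (intro CollectI ballI)
  fix b :: 'e assume b: "b \<in> Basis"
  have u: "0 \<le> u \<bullet> b" "u \<bullet> b \<le> 1" using assms b by (auto simp: unitc_def)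
  have f0: "0 \<le> \<lfloor>2^n * (u \<bullet> b)\<rfloor>" using u by simp
  have "\<lfloor>2^n * (u \<bullet> b)\<rfloor> \<le> \<lfloor>(2::real)^n\<rfloor>" using u by (intro floor_mono) simp
  then have f1: "\<lfloor>2^n * (u \<bullet> b)\<rfloor> \<le> 2^n" by simp
  show "\<exists>k::nat. k \<le> 2^n \<and> trn n u \<bullet> b = real k / 2^n"
    using f0 f1 b by (intro exI[of _ "nat \<lfloor>2^n * (u \<bullet> b)\<rfloor>"]) (auto simp: trn_inner nat_le_iff)
qed

lemma grid_unitc: "grid n \<subseteq> unitc"
proof
  fix u :: "'e::euclidean_space" assume u: "u \<in> grid n"
  show "u \<in> unitc" unfolding unitc_def
  proof (intro CollectI ballI)
    fix b :: 'e assume b: "b \<in> Basis"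
    obtain k::nat where k: "k \<le> 2^n" "u \<bullet> b = real k / 2^n" using u b by (auto simp: grid_def)
    have "real k \<le> 2^n" using k(1) by (metis of_nat_le_iff of_nat_numeral of_nat_power)
    then show "0 \<le> u \<bullet> b \<and> u \<bullet> b \<le> 1" using k(2) by simp
  qed
qed

lemma trn_id: assumes "(u::'e::euclidean_space) \<in> grid n" shows "trn n u = u"
proof (rule euclidean_eqI)
  fix b :: 'e assume b: "b \<in> Basis"
  obtain k::nat where k: "u \<bullet> b = real k / 2^n" using assms b by (auto simp: grid_def)
  show "trn n u \<bullet> b = u \<bullet> b" using b k by (simp add: trn_inner)
qed

lemma ws_inner:
  fixes w d :: "'e::euclidean_space"
  assumes "S \<subseteq> Basis" "c \<in> Basis"
  shows "(w + (\<Sum>b\<in>S. (d \<bullet> b) *\<^sub>R b)) \<bullet> c = w \<bullet> c + (if c \<in> S then d \<bullet> c else 0)"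
proof -
  have "(\<Sum>b\<in>S. (d \<bullet> b) *\<^sub>R b) \<bullet> c = (\<Sum>b\<in>S. (d \<bullet> b) * (b \<bullet> c))"
    by (simp add: inner_sum_left)
  also have "\<dots> = (\<Sum>b\<in>S. if b = c then d \<bullet> c else 0)"
    using assms by (intro sum.cong) (auto simp: inner_Basis)
  also have "\<dots> = (if c \<in> S then d \<bullet> c else 0)"
    using assms by (simp add: sum.delta' finite_subset[OF _ finite_Basis])
  finally show ?thesis by (simp add: inner_add_left)
qed

lemma chain_step:
  fixes f :: "'e::euclidean_space \<Rightarrow> real"
  assumes w: "w \<in> grid n" "w' \<in> grid n"
    and d: "\<forall>b\<in>Basis. (w' - w) \<bullet> b \<in> {-(1/2^n), 0, 1/2^n}"
  shows "\<bar>f w' - f w\<bar> \<le> DIM('e) * Mx n f"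
proof -
  define ws where "ws S = w + (\<Sum>b\<in>S. ((w' - w) \<bullet> b) *\<^sub>R b)" for S
  have wsc: "ws S \<bullet> c = (if c \<in> S then w' \<bullet> c else w \<bullet> c)" if "S \<subseteq> Basis" "c \<in> Basis" for S c
    using ws_inner[OF that, of w "w' - w"] by (simp add: ws_def inner_diff_left)
  have wsg: "ws S \<in> grid n" if "S \<subseteq> Basis" for S
    using w unfolding grid_def by (auto simp: wsc[OF that])
  have main: "S \<subseteq> Basis \<longrightarrow> \<bar>f (ws S) - f w\<bar> \<le> card S * Mx n f" if "finite S" for S
    using that
  proof (induction S rule: finite_induct)
    case empty then show ?case by (simp add: ws_def)
  next
    case (insert b S)
    show ?case
    proof
      assume sub: "insert b S \<subseteq> Basis"
      then have bB: "b \<in> Basis" and SB: "S \<subseteq> Basis" by auto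
      have IH: "\<bar>f (ws S) - f w\<bar> \<le> card S * Mx n f" using insert SB by blast
      have e: "ws (insert b S) = ws S + ((w' - w) \<bullet> b) *\<^sub>R b"
        using insert by (simp add: ws_def add.assoc)
      have g1: "ws S \<in> grid n" "ws (insert b S) \<in> grid n" using wsg SB sub by auto
      have step: "\<bar>f (ws (insert b S)) - f (ws S)\<bar> \<le> Mx n f"
      proof -
        have "(w' - w) \<bullet> b \<in> {-(1/2^n), 0, 1/2^n}" using d bB by blast
        then consider "(w' - w) \<bullet> b = -(1/2^n)" | "(w' - w) \<bullet> b = 0" | "(w' - w) \<bullet> b = 1/2^n" by blast
        then show ?thesis
        proof cases
          case 1
          have "ws (insert b S) + (1/2^n) *\<^sub>R b = ws S + ((w' - w) \<bullet> b + 1/2^n) *\<^sub>R b"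
            unfolding e by (simp add: scaleR_add_left)
          then have "ws (insert b S) + (1/2^n) *\<^sub>R b = ws S" using 1 by simp
          then have "(ws (insert b S), b) \<in> idx n" using g1 bB by (simp add: idx_def)
          from Mx_ge[OF this, of f] show ?thesis
            using \<open>ws (insert b S) + (1/2^n) *\<^sub>R b = ws S\<close> by (simp add: abs_minus_commute)
        next
          case 2 then show ?thesis using e Mx_nonneg[of n f] by simp
        next
          case 3
          have "(ws S, b) \<in> idx n" using g1 bB e 3 by (simp add: idx_def)
          from Mx_ge[OF this, of f] show ?thesis using e 3 by simp
        qed
      qed
      have "\<bar>f (ws (insert b S)) - f w\<bar> \<le> \<bar>f (ws (insert b S)) - f (ws S)\<bar> + \<bar>f (ws S) - f w\<bar>" by linarith
      also have "\<dots> \<le> Mx n f + card S * Mx n f" using step IH by linarith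
      also have "\<dots> = card (insert b S) * Mx n f" using insert by (simp add: algebra_simps)
      finally show "\<bar>f (ws (insert b S)) - f w\<bar> \<le> card (insert b S) * Mx n f" .
    qed
  qed
  have "ws Basis = w'"
  proof (rule euclidean_eqI)
    fix c :: 'e assume "c \<in> Basis" then show "ws Basis \<bullet> c = w' \<bullet> c" by (simp add: wsc)
  qed
  with main[of Basis] show ?thesis by simp
qed

lemma floor_double: "\<lfloor>2 * y\<rfloor> = 2 * \<lfloor>y\<rfloor> \<or> \<lfloor>2 * y\<rfloor> = 2 * \<lfloor>y\<rfloor> + 1" for y :: real
proof -
  have a: "of_int \<lfloor>y\<rfloor> \<le> y" "y < of_int \<lfloor>y\<rfloor> + 1" by linarith+
  show ?thesis
  proof (cases "y < of_int \<lfloor>y\<rfloor> + 1/2")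
    case True
    then have "\<lfloor>2 * y\<rfloor> = 2 * \<lfloor>y\<rfloor>" using a by (intro floor_unique) auto
    then show ?thesis by simp
  next
    case False
    then have "\<lfloor>2 * y\<rfloor> = 2 * \<lfloor>y\<rfloor> + 1" using a by (intro floor_unique; simp; linarith)
    then show ?thesis by simp
  qed
qed

lemma floor_step: "of_int \<lfloor>2^Suc n * (x::real)\<rfloor> / 2^Suc n - of_int \<lfloor>2^n * x\<rfloor> / (2::real)^n \<in> {-(1/2^Suc n), 0, 1/2^Suc n}"
proof -
  define a where "a = \<lfloor>2^n * x\<rfloor>"
  have e: "(2::real)^Suc n * x = 2 * (2^n * x)" by simp
  have p: "(2::real)^Suc n = 2 * 2^n" by simp
  have h: "\<lfloor>2^Suc n * x\<rfloor> = 2 * a \<or> \<lfloor>2^Suc n * x\<rfloor> = 2 * a + 1"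
    unfolding e a_def by (rule floor_double)
  have z: "real_of_int (2 * a) / 2^Suc n - real_of_int a / 2^n = 0"
    unfolding p by (simp add: field_simps)
  have o: "real_of_int (2 * a + 1) / 2^Suc n - real_of_int a / 2^n = 1/2^Suc n"
    unfolding p by (simp add: field_simps)
  from h z o show ?thesis unfolding a_def[symmetric] by auto
qed

lemma trn_step:
  fixes f :: "'e::euclidean_space \<Rightarrow> real"
  assumes u: "u \<in> unitc"
  shows "\<bar>f (trn (Suc n) u) - f (trn n u)\<bar> \<le> DIM('e) * Mx (Suc n) f"
proof (rule chain_step)
  show "trn (Suc n) u \<in> grid (Suc n)" using trn_grid[OF u] .
  show "trn n u \<in> grid (Suc n)" using trn_grid[OF u, of n] grid_mono[of n "Suc n"] by auto
  show "\<forall>b\<in>Basis. (trn (Suc n) u - trn n u) \<bullet> b \<in> {- (1 / 2 ^ Suc n), 0, 1 / 2 ^ Suc n}"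
    using floor_step by (simp add: inner_diff_left trn_inner del: power_Suc)
qed

lemma trn_tele:
  fixes f :: "'e::euclidean_space \<Rightarrow> real"
  assumes u: "u \<in> unitc" and mk: "m \<le> k"
  shows "\<bar>f (trn k u) - f (trn m u)\<bar> \<le> DIM('e) * (\<Sum>i\<in>{m<..k}. Mx i f)"
  using mk
proof (induction k rule: dec_induct)
  case base then show ?case by simp
next
  case (step k)
  have "\<bar>f (trn (Suc k) u) - f (trn m u)\<bar> \<le> \<bar>f (trn (Suc k) u) - f (trn k u)\<bar> + \<bar>f (trn k u) - f (trn m u)\<bar>"
    by linarith
  also have "\<dots> \<le> DIM('e) * Mx (Suc k) f + DIM('e) * (\<Sum>i\<in>{m<..k}. Mx i f)"
    using trn_step[OF u, of f k] step.IH by linarith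
  also have "\<dots> = DIM('e) * (\<Sum>i\<in>{m<..Suc k}. Mx i f)"
  proof -
    have "{m<..Suc k} = insert (Suc k) {m<..k}" using step.hyps by auto
    then show ?thesis by (simp add: algebra_simps)
  qed
  finally show ?case .
qed

lemma floor_close:
  fixes a c :: real assumes "\<bar>a - c\<bar> \<le> 1"
  shows "of_int \<lfloor>a\<rfloor> - of_int \<lfloor>c\<rfloor> \<in> {-1, 0, 1::real}"
proof -
  have "\<lfloor>a\<rfloor> - \<lfloor>c\<rfloor> \<le> 1" "\<lfloor>c\<rfloor> - \<lfloor>a\<rfloor> \<le> 1" using assms by linarith+
  then have "\<lfloor>a\<rfloor> - \<lfloor>c\<rfloor> \<in> {-1, 0, 1::int}" by auto
  then consider "\<lfloor>a\<rfloor> - \<lfloor>c\<rfloor> = -1" | "\<lfloor>a\<rfloor> - \<lfloor>c\<rfloor> = 0" | "\<lfloor>a\<rfloor> - \<lfloor>c\<rfloor> = 1" by blast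
  then show ?thesis
  proof cases
    case 1 then have "real_of_int (\<lfloor>a\<rfloor> - \<lfloor>c\<rfloor>) = -1" by simp
    then show ?thesis by simp
  next
    case 2 then have "real_of_int (\<lfloor>a\<rfloor> - \<lfloor>c\<rfloor>) = 0" by simp
    then show ?thesis by simp
  next
    case 3 then have "real_of_int (\<lfloor>a\<rfloor> - \<lfloor>c\<rfloor>) = 1" by simp
    then show ?thesis by simp
  qed
qed

lemma trn_close:
  fixes f :: "'e::euclidean_space \<Rightarrow> real"
  assumes u: "u \<in> unitc" and v: "v \<in> unitc" and c: "\<forall>b\<in>Basis. \<bar>u \<bullet> b - v \<bullet> b\<bar> \<le> 1/2^m"
  shows "\<bar>f (trn m u) - f (trn m v)\<bar> \<le> DIM('e) * Mx m f"
proof -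
  have "\<bar>f (trn m u) - f (trn m v)\<bar> \<le> DIM('e) * Mx m f"
  proof (rule chain_step)
    show "trn m v \<in> grid m" "trn m u \<in> grid m" using trn_grid u v by auto
    show "\<forall>b\<in>Basis. (trn m u - trn m v) \<bullet> b \<in> {- (1 / 2 ^ m), 0, 1 / 2 ^ m}"
    proof
      fix b :: 'e assume b: "b \<in> Basis"
      have "\<bar>2^m * (u \<bullet> b) - 2^m * (v \<bullet> b)\<bar> = 2^m * \<bar>u \<bullet> b - v \<bullet> b\<bar>"
        by (simp add: right_diff_distrib[symmetric] abs_mult)
      also have "\<dots> \<le> 2^m * (1/2^m)" using c b by (intro mult_left_mono) auto
      finally have "\<bar>2^m * (u \<bullet> b) - 2^m * (v \<bullet> b)\<bar> \<le> 1" by simp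
      from floor_close[OF this] have
        "of_int \<lfloor>2^m * (u \<bullet> b)\<rfloor> - of_int \<lfloor>2^m * (v \<bullet> b)\<rfloor> \<in> {-1, 0, 1::real}" .
      then show "(trn m u - trn m v) \<bullet> b \<in> {- (1 / 2 ^ m), 0, 1 / 2 ^ m}"
        using b by (auto simp: inner_diff_left trn_inner diff_divide_distrib[symmetric])
    qed
  qed
  then show ?thesis .
qed

definition dyad :: "'e::euclidean_space set" where "dyad = (\<Union>n. grid n)"

lemma geo_bound:
  fixes q :: real assumes "0 \<le> q" "q < 1"
  shows "(\<Sum>i\<in>{m<..k}. q^i) \<le> q^m / (1 - q)"
proof -
  have "(\<Sum>i\<in>{m<..k}. q^i) \<le> (\<Sum>i\<in>{m..k}. q^i)"
    by (rule sum_mono2) (use assms in auto)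
  also have "\<dots> \<le> q^m / (1 - q)"
  proof (cases "k < m")
    case True then show ?thesis using assms by simp
  next
    case False
    then have "(\<Sum>i\<in>{m..k}. q^i) = (q^m - q^Suc k) / (1 - q)" using assms by (simp add: sum_gp)
    also have "\<dots> \<le> q^m / (1 - q)" using assms by (intro divide_right_mono) auto
    finally show ?thesis .
  qed
  finally show ?thesis .
qed

lemma modulus:
  fixes f :: "'e::euclidean_space \<Rightarrow> real" and q R :: real
  assumes q: "0 \<le> q" "q < 1" and R: "\<And>n. Mx n f \<le> R * q^n"
    and u: "u \<in> dyad" and v: "v \<in> dyad" and c: "\<forall>b\<in>Basis. \<bar>u \<bullet> b - v \<bullet> b\<bar> \<le> 1/2^m"
  shows "\<bar>f u - f v\<bar> \<le> 3 * (real DIM('e) * (R * q^m / (1 - q)))"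
proof -
  obtain k1 k2 where k: "u \<in> grid k1" "v \<in> grid k2" using u v by (auto simp: dyad_def)
  define k where "k = max m (max k1 k2)"
  have kk: "k1 \<le> k" "k2 \<le> k" by (auto simp: k_def)
  have uk: "u \<in> grid k" "v \<in> grid k" using k subsetD[OF grid_mono[OF kk(1)]] subsetD[OF grid_mono[OF kk(2)]] by auto
  have uu: "u \<in> unitc" "v \<in> unitc" using uk grid_unitc by auto
  have mk: "m \<le> k" by (simp add: k_def)
  have R0: "0 \<le> R"
  proof -
    have "0 \<le> R * q^0" using R[of 0] Mx_nonneg[of 0 f] by linarith
    then show ?thesis by simp
  qed
  have sumR: "(\<Sum>i\<in>{m<..k}. Mx i f) \<le> R * q^m / (1 - q)"
  proof -
    have "(\<Sum>i\<in>{m<..k}. Mx i f) \<le> (\<Sum>i\<in>{m<..k}. R * q^i)" by (rule sum_mono) (rule R)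
    also have "\<dots> = R * (\<Sum>i\<in>{m<..k}. q^i)" by (simp add: sum_distrib_left)
    also have "\<dots> \<le> R * (q^m / (1 - q))" using geo_bound[OF q] R0 by (intro mult_left_mono) auto
    finally show ?thesis by simp
  qed
  have sumR': "DIM('e) * (\<Sum>i\<in>{m<..k}. Mx i f) \<le> DIM('e) * (R * q^m / (1 - q))"
    by (rule mult_left_mono[OF sumR]) simp
  have t1: "\<bar>f u - f (trn m u)\<bar> \<le> DIM('e) * (R * q^m / (1 - q))"
    using trn_tele[OF uu(1) mk, of f] trn_id[OF uk(1)] sumR' by simp
  have t2: "\<bar>f v - f (trn m v)\<bar> \<le> DIM('e) * (R * q^m / (1 - q))"
    using trn_tele[OF uu(2) mk, of f] trn_id[OF uk(2)] sumR' by simp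
  have "Mx m f \<le> R * q^m / (1 - q)"
  proof -
    have "R * q^m \<le> R * q^m / (1 - q)" using q R0 by (simp add: le_divide_eq mult_left_le)
    then show ?thesis using R[of m] by linarith
  qed
  then have "DIM('e) * Mx m f \<le> DIM('e) * (R * q^m / (1 - q))" by (rule mult_left_mono) simp
  then have t3: "\<bar>f (trn m u) - f (trn m v)\<bar> \<le> DIM('e) * (R * q^m / (1 - q))"
    using trn_close[OF uu c, of f] by linarith
  have "\<bar>f u - f v\<bar> \<le> \<bar>f u - f (trn m u)\<bar> + \<bar>f (trn m u) - f (trn m v)\<bar> + \<bar>f v - f (trn m v)\<bar>"
    by linarith
  also have "\<dots> \<le> DIM('e) * (R * q^m / (1 - q)) + DIM('e) * (R * q^m / (1 - q)) + DIM('e) * (R * q^m / (1 - q))"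
    by (intro add_mono t1 t2 t3)
  finally show ?thesis by (simp add: mult.commute mult.left_commute)
qed



lemma Mx_alt: "Mx n f = (MAX i\<in>insert None (Some ` idx n). (case i of None \<Rightarrow> 0 | Some ub \<Rightarrow> \<bar>f (fst ub + (1/2^n) *\<^sub>R snd ub) - f (fst ub)\<bar>))"
  unfolding Mx_def by (simp add: image_image case_prod_beta)

lemma idx_unitc: "(u,b) \<in> idx n \<Longrightarrow> u \<in> unitc \<and> u + (1/2^n) *\<^sub>R b \<in> unitc"
  using grid_unitc by (auto simp: idx_def)

lemma Mx_measurable:
  fixes Z :: "'e::euclidean_space \<Rightarrow> 'b \<Rightarrow> real"
  assumes meas: "\<And>u. u \<in> unitc \<Longrightarrow> Z u \<in> borel_measurable M"
  shows "(\<lambda>\<omega>. Mx n (\<lambda>u. Z u \<omega>)) \<in> borel_measurable M"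
proof -
  have "(\<lambda>\<omega>. MAX i\<in>insert None (Some ` idx n). (case i of None \<Rightarrow> 0 | Some ub \<Rightarrow> \<bar>Z (fst ub + (1/2^n) *\<^sub>R snd ub) \<omega> - Z (fst ub) \<omega>\<bar>)) \<in> borel_measurable M"
  proof (rule borel_measurable_Max)
    show "finite (insert None (Some ` idx n))" by (simp add: finite_idx)
  next
    fix i assume i: "i \<in> insert None (Some ` (idx n :: ('e \<times> 'e) set))"
    show "(\<lambda>\<omega>. case i of None \<Rightarrow> 0 | Some ub \<Rightarrow> \<bar>Z (fst ub + (1/2^n) *\<^sub>R snd ub) \<omega> - Z (fst ub) \<omega>\<bar>) \<in> borel_measurable M"
    proof (cases i)
      case None then show ?thesis by simp
    next
      case (Some ub)
      then obtain u b where ub: "i = Some (u,b)" "(u,b) \<in> idx n" using i by auto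
      have m1: "Z u \<in> borel_measurable M" "Z (u + (1/2^n) *\<^sub>R b) \<in> borel_measurable M"
        using idx_unitc[OF ub(2)] meas by auto
      show ?thesis using m1 by (simp add: ub)
    qed
  qed
  then show ?thesis by (simp add: Mx_alt)
qed

definition Sx :: "real \<Rightarrow> real \<Rightarrow> ('e::euclidean_space \<Rightarrow> 'b \<Rightarrow> real) \<Rightarrow> 'b \<Rightarrow> ennreal" where
  "Sx p \<epsilon> Z \<omega> = (\<Sum>n. ennreal (2 powr (real n * \<epsilon> * p) * (Mx n (\<lambda>u. Z u \<omega>)) powr p))"

lemma Sx_measurable:
  fixes Z :: "'e::euclidean_space \<Rightarrow> 'b \<Rightarrow> real"
  assumes meas: "\<And>u. u \<in> unitc \<Longrightarrow> Z u \<in> borel_measurable M"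
  shows "Sx p \<epsilon> Z \<in> borel_measurable M"
proof -
  have [measurable]: "(\<lambda>\<omega>. Mx n (\<lambda>u. Z u \<omega>)) \<in> borel_measurable M" for n
    by (rule Mx_measurable[OF meas])
  show ?thesis unfolding Sx_def[abs_def] by measurable
qed

lemma Mx_pow_le:
  fixes f :: "'e::euclidean_space \<Rightarrow> real"
  assumes p: "p > 0"
  shows "ennreal ((Mx n f) powr p) \<le> (\<Sum>i\<in>idx n. ennreal (\<bar>f (fst i + (1/2^n) *\<^sub>R snd i) - f (fst i)\<bar> powr p))"
proof -
  have "Mx n f \<in> insert 0 ((\<lambda>(u,b). \<bar>f (u + (1/2^n) *\<^sub>R b) - f u\<bar>) ` idx n)"
    unfolding Mx_def by (rule Max_in) (auto simp: finite_idx)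
  then show ?thesis
  proof
    assume "Mx n f = 0" then show ?thesis by simp
  next
    assume "Mx n f \<in> (\<lambda>(u,b). \<bar>f (u + (1/2^n) *\<^sub>R b) - f u\<bar>) ` idx n"
    then obtain i where i: "i \<in> idx n" "Mx n f = \<bar>f (fst i + (1/2^n) *\<^sub>R snd i) - f (fst i)\<bar>"
      by (auto simp: case_prod_beta)
    show ?thesis unfolding i(2)
      by (rule member_le_sum[OF i(1)]) (auto simp: finite_idx)
  qed
qed

lemma unit_prob:
  fixes Z :: "'e::euclidean_space \<Rightarrow> 'b \<Rightarrow> real" and p K \<eta> :: real
  assumes p: "p > 0" and K: "K \<ge> 0" and eta: "\<eta> > DIM('e)"
    and meas: "\<And>u. u \<in> unitc \<Longrightarrow> Z u \<in> borel_measurable M"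
    and inc: "\<And>n u b. (u,b) \<in> idx n \<Longrightarrow>
       (\<integral>\<^sup>+\<omega>. ennreal (\<bar>Z (u + (1/2^n) *\<^sub>R b) \<omega> - Z u \<omega>\<bar> powr p) \<partial>M) \<le> ennreal (K * 2 powr (- real n * \<eta>))"
  shows "(\<integral>\<^sup>+\<omega>. Sx p ((\<eta> - DIM('e)) / (2*p)) Z \<omega> \<partial>M)
     \<le> ennreal (K * DIM('e) * 2^DIM('e) / (1 - 2 powr (-(\<eta> - DIM('e))/2)))"
proof -
  define N where "N = real DIM('e)"
  define \<epsilon> where "\<epsilon> = (\<eta> - N) / (2*p)"
  define r where "r = 2 powr (-(\<eta> - N)/2)"
  have r: "0 < r" "r < 1"
  proof -
    show "0 < r" by (simp add: r_def)
    have "2 powr (-(\<eta> - N)/2) < 2 powr (0::real)" using eta by (intro powr_less_mono) (auto simp: N_def)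
    then show "r < 1" by (simp add: r_def)
  qed
  have [measurable]: "(\<lambda>\<omega>. Mx n (\<lambda>u. Z u \<omega>)) \<in> borel_measurable M" for n
    by (rule Mx_measurable[OF meas])
  have hterm: "(\<integral>\<^sup>+\<omega>. ennreal (2 powr (real n * \<epsilon> * p) * (Mx n (\<lambda>u. Z u \<omega>)) powr p) \<partial>M)
      \<le> ennreal (K * N * 2^DIM('e) * r^n)" for n
  proof -
    have "(\<integral>\<^sup>+\<omega>. ennreal (2 powr (real n * \<epsilon> * p) * (Mx n (\<lambda>u. Z u \<omega>)) powr p) \<partial>M)
        = ennreal (2 powr (real n * \<epsilon> * p)) * (\<integral>\<^sup>+\<omega>. ennreal ((Mx n (\<lambda>u. Z u \<omega>)) powr p) \<partial>M)"
      by (subst nn_integral_cmult[symmetric]) (auto simp: ennreal_mult)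
    also have "(\<integral>\<^sup>+\<omega>. ennreal ((Mx n (\<lambda>u. Z u \<omega>)) powr p) \<partial>M)
        \<le> (\<integral>\<^sup>+\<omega>. (\<Sum>i\<in>idx n. ennreal (\<bar>Z (fst i + (1/2^n) *\<^sub>R snd i) \<omega> - Z (fst i) \<omega>\<bar> powr p)) \<partial>M)"
      by (rule nn_integral_mono) (rule Mx_pow_le[OF p])
    also have "\<dots> = (\<Sum>i\<in>idx n. \<integral>\<^sup>+\<omega>. ennreal (\<bar>Z (fst i + (1/2^n) *\<^sub>R snd i) \<omega> - Z (fst i) \<omega>\<bar> powr p) \<partial>M)"
    proof (rule nn_integral_sum)
      fix i assume i: "i \<in> (idx n :: ('e \<times> 'e) set)"
      then have "Z (fst i) \<in> borel_measurable M" "Z (fst i + (1/2^n) *\<^sub>R snd i) \<in> borel_measurable M"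
        using idx_unitc[of "fst i" "snd i" n] meas by auto
      then show "(\<lambda>\<omega>. ennreal (\<bar>Z (fst i + (1/2^n) *\<^sub>R snd i) \<omega> - Z (fst i) \<omega>\<bar> powr p)) \<in> borel_measurable M"
        by measurable
    qed
    also have "\<dots> \<le> (\<Sum>i\<in>(idx n :: ('e \<times> 'e) set). ennreal (K * 2 powr (- real n * \<eta>)))"
      using inc by (intro ordered_comm_monoid_add_class.sum_mono) (auto simp: case_prod_beta)
    also have "\<dots> = of_nat (card (idx n :: ('e \<times> 'e) set)) * ennreal (K * 2 powr (- real n * \<eta>))"
      by simp
    also have "\<dots> \<le> of_nat ((2^n+1)^DIM('e) * DIM('e)) * ennreal (K * 2 powr (- real n * \<eta>))"
      by (intro mult_right_mono of_nat_mono card_idx) simp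
    finally have A: "(\<integral>\<^sup>+\<omega>. ennreal (2 powr (real n * \<epsilon> * p) * (Mx n (\<lambda>u. Z u \<omega>)) powr p) \<partial>M)
       \<le> ennreal (2 powr (real n * \<epsilon> * p)) * (of_nat ((2^n+1)^DIM('e) * DIM('e)) * ennreal (K * 2 powr (- real n * \<eta>)))"
      by (simp add: mult_left_mono)
    have B: "2 powr (real n * \<epsilon> * p) * (real ((2^n+1)^DIM('e) * DIM('e)) * (K * 2 powr (- real n * \<eta>)))
        \<le> K * N * 2^DIM('e) * r^n"
    proof -
      have c1: "real ((2^n+1)^DIM('e)) \<le> 2^DIM('e) * 2 powr (real n * N)"
      proof -
        have "real ((2^n+1)^DIM('e)) = (2^n+1)^DIM('e)" by (metis of_nat_1 of_nat_add of_nat_numeral of_nat_power)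
        also have "\<dots> \<le> (2 * 2^n)^DIM('e)" by (intro power_mono) auto
        also have "\<dots> = 2^DIM('e) * (2^n)^DIM('e)" by (simp add: power_mult_distrib)
        also have "(2::real)^n = 2 powr real n" by (simp add: powr_realpow)
        also have "(2 powr real n)^DIM('e) = 2 powr (real n * N)"
          by (simp add: N_def powr_realpow[symmetric] powr_powr)
        finally show ?thesis .
      qed
      have c2: "2 powr (real n * \<epsilon> * p) * 2 powr (real n * N) * 2 powr (- real n * \<eta>) = r^n"
      proof -
        have "2 powr (real n * \<epsilon> * p) * 2 powr (real n * N) * 2 powr (- real n * \<eta>)
            = 2 powr (real n * \<epsilon> * p + real n * N + (- real n * \<eta>))" by (simp only: powr_add[symmetric])
        also have "real n * \<epsilon> * p + real n * N + (- real n * \<eta>) = real n * (-(\<eta> - N)/2)"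
          using p by (simp add: \<epsilon>_def field_simps)
        also have "2 powr (real n * (-(\<eta> - N)/2)) = r^n"
          by (simp add: r_def powr_realpow[symmetric] powr_powr mult.commute)
        finally show ?thesis .
      qed
      have "2 powr (real n * \<epsilon> * p) * (real ((2^n+1)^DIM('e) * DIM('e)) * (K * 2 powr (- real n * \<eta>)))
          = real ((2^n+1)^DIM('e)) * (K * N * (2 powr (real n * \<epsilon> * p) * 2 powr (- real n * \<eta>)))"
        by (simp add: N_def algebra_simps)
      also have "\<dots> \<le> (2^DIM('e) * 2 powr (real n * N)) * (K * N * (2 powr (real n * \<epsilon> * p) * 2 powr (- real n * \<eta>)))"
        by (rule mult_right_mono[OF c1]) (use K in \<open>auto simp: N_def\<close>)
      also have "\<dots> = K * N * 2^DIM('e) * (2 powr (real n * \<epsilon> * p) * 2 powr (real n * N) * 2 powr (- real n * \<eta>))"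
        by (simp add: algebra_simps)
      also have "\<dots> = K * N * 2^DIM('e) * r^n" by (simp only: c2)
      finally show ?thesis .
    qed
    have "ennreal (2 powr (real n * \<epsilon> * p)) * (of_nat ((2^n+1)^DIM('e) * DIM('e)) * ennreal (K * 2 powr (- real n * \<eta>)))
        = ennreal (2 powr (real n * \<epsilon> * p) * (real ((2^n+1)^DIM('e) * DIM('e)) * (K * 2 powr (- real n * \<eta>))))"
      using K by (simp add: ennreal_mult ennreal_of_nat_eq_real_of_nat)
    also have "\<dots> \<le> ennreal (K * N * 2^DIM('e) * r^n)" using B by (rule ennreal_leI)
    finally show ?thesis using A by (rule order.trans[rotated])
  qed
  have "(\<integral>\<^sup>+\<omega>. Sx p \<epsilon> Z \<omega> \<partial>M) = (\<Sum>n. \<integral>\<^sup>+\<omega>. ennreal (2 powr (real n * \<epsilon> * p) * (Mx n (\<lambda>u. Z u \<omega>)) powr p) \<partial>M)"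
    unfolding Sx_def by (rule nn_integral_suminf) measurable
  also have "\<dots> \<le> (\<Sum>n. ennreal (K * N * 2^DIM('e) * r^n))"
    by (intro suminf_le hterm) auto
  also have "\<dots> = ennreal (K * N * 2^DIM('e) * (1 / (1 - r)))"
  proof (rule suminf_ennreal_eq)
    show "0 \<le> K * N * 2^DIM('e) * r^n" for n using K r by (simp add: N_def)
    show "(\<lambda>n. K * N * 2^DIM('e) * r^n) sums (K * N * 2^DIM('e) * (1 / (1 - r)))"
      by (rule sums_mult) (rule geometric_sums, use r in auto)
  qed
  finally show ?thesis by (simp add: \<epsilon>_def N_def r_def)
qed



lemma Sx_Mx:
  fixes Z :: "'e::euclidean_space \<Rightarrow> 'b \<Rightarrow> real"
  assumes p: "p > 0" and fin: "Sx p \<epsilon> Z \<omega> \<noteq> \<infinity>"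
  shows "Mx n (\<lambda>u. Z u \<omega>) \<le> (enn2real (Sx p \<epsilon> Z \<omega>)) powr (1/p) * (2 powr (-\<epsilon>))^n"
proof -
  define S where "S = enn2real (Sx p \<epsilon> Z \<omega>)"
  define m where "m = Mx n (\<lambda>u. Z u \<omega>)"
  have m0: "0 \<le> m" by (simp add: m_def Mx_nonneg)
  have S0: "0 \<le> S" by (simp add: S_def)
  have SS: "Sx p \<epsilon> Z \<omega> = ennreal S" using fin by (simp add: S_def ennreal_enn2real_if)
  have "ennreal (2 powr (real n * \<epsilon> * p) * m powr p) \<le> Sx p \<epsilon> Z \<omega>"
  proof -
    have "(\<Sum>i\<in>{n}. ennreal (2 powr (real i * \<epsilon> * p) * (Mx i (\<lambda>u. Z u \<omega>)) powr p))
        \<le> (\<Sum>i. ennreal (2 powr (real i * \<epsilon> * p) * (Mx i (\<lambda>u. Z u \<omega>)) powr p))"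
      by (rule sum_le_suminf) auto
    then show ?thesis by (simp add: Sx_def m_def)
  qed
  then have le: "2 powr (real n * \<epsilon> * p) * m powr p \<le> S" using SS S0 by simp
  have "m powr p \<le> S * 2 powr (- real n * \<epsilon> * p)"
  proof -
    have "m powr p = (2 powr (real n * \<epsilon> * p) * m powr p) * 2 powr (- real n * \<epsilon> * p)"
      by (simp add: powr_minus field_simps)
    also have "\<dots> \<le> S * 2 powr (- real n * \<epsilon> * p)" using le by (intro mult_right_mono) auto
    finally show ?thesis .
  qed
  then have "(m powr p) powr (1/p) \<le> (S * 2 powr (- real n * \<epsilon> * p)) powr (1/p)"
    using p m0 by (intro powr_mono2) auto
  also have "(m powr p) powr (1/p) = m" using p m0 by (simp add: powr_powr)
  also have "(S * 2 powr (- real n * \<epsilon> * p)) powr (1/p) = S powr (1/p) * (2 powr (- real n * \<epsilon> * p)) powr (1/p)"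
    using S0 by (simp add: powr_mult)
  also have "(2 powr (- real n * \<epsilon> * p)) powr (1/p) = (2 powr (-\<epsilon>))^n"
    using p by (simp add: powr_powr powr_realpow[symmetric] mult.commute)
  finally show ?thesis by (simp add: S_def m_def)
qed

lemma dyad_modulus:
  fixes Z :: "'e::euclidean_space \<Rightarrow> 'b \<Rightarrow> real"
  assumes p: "p > 0" and e: "\<epsilon> > 0" and fin: "Sx p \<epsilon> Z \<omega> \<noteq> \<infinity>"
    and u: "u \<in> dyad" and v: "v \<in> dyad" and c: "\<forall>b\<in>Basis. \<bar>u \<bullet> b - v \<bullet> b\<bar> \<le> 1/2^m"
  shows "\<bar>Z u \<omega> - Z v \<omega>\<bar> \<le> 3 * (real DIM('e) * ((enn2real (Sx p \<epsilon> Z \<omega>)) powr (1/p) * (2 powr (-\<epsilon>))^m / (1 - 2 powr (-\<epsilon>))))"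
proof (rule modulus[where f="\<lambda>u. Z u \<omega>", OF _ _ _ u v c])
  show "0 \<le> 2 powr - \<epsilon>" by simp
  show "2 powr - \<epsilon> < 1"
  proof -
    have "2 powr (-\<epsilon>) < 2 powr (0::real)" using e by (intro powr_less_mono) auto
    then show ?thesis by simp
  qed
  show "Mx n (\<lambda>u. Z u \<omega>) \<le> enn2real (Sx p \<epsilon> Z \<omega>) powr (1 / p) * (2 powr - \<epsilon>) ^ n" for n
    by (rule Sx_Mx[OF p fin])
qed

lemma zero_dyad: "(0::'e::euclidean_space) \<in> dyad"
proof -
  have "(0::'e) \<in> grid 0" by (auto simp: grid_def)
  then show ?thesis by (auto simp: dyad_def)
qed

lemma dyad_unitc: "dyad \<subseteq> unitc"
  using grid_unitc by (auto simp: dyad_def)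

lemma dyad_osc:
  fixes Z :: "'e::euclidean_space \<Rightarrow> 'b \<Rightarrow> real"
  assumes p: "p > 0" and e: "\<epsilon> > 0" and fin: "Sx p \<epsilon> Z \<omega> \<noteq> \<infinity>" and u: "u \<in> dyad"
  shows "\<bar>Z u \<omega> - Z 0 \<omega>\<bar> \<le> 3 * (real DIM('e) * ((enn2real (Sx p \<epsilon> Z \<omega>)) powr (1/p) / (1 - 2 powr (-\<epsilon>))))"
proof -
  have "\<forall>b\<in>Basis. \<bar>u \<bullet> b - (0::'e) \<bullet> b\<bar> \<le> 1/2^0"
    using u dyad_unitc by (auto simp: unitc_def)
  from dyad_modulus[OF p e fin u zero_dyad this] show ?thesis by simp
qed



lemma inner_fst: "(u::'a::euclidean_space \<times> real) \<bullet> (b, 0) = fst u \<bullet> b" by (cases u) simp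
lemma inner_snd: "(u::'a::euclidean_space \<times> real) \<bullet> (0, 1) = snd u" by (cases u) simp

lemma Basis_prod_real: "(Basis :: ('a::euclidean_space \<times> real) set) = (\<lambda>b. (b, 0)) ` Basis \<union> {(0, 1)}"
  by (simp add: Basis_prod_def)

lemma ball_Basis_prod:
  "(\<forall>c\<in>(Basis :: ('a::euclidean_space \<times> real) set). P c) \<longleftrightarrow> (\<forall>b\<in>Basis. P (b, 0)) \<and> P (0, 1)"
  by (auto simp: Basis_prod_real)

lemma unitc_prod: "(u::'a::euclidean_space \<times> real) \<in> unitc \<longleftrightarrow>
   (\<forall>b\<in>Basis. 0 \<le> fst u \<bullet> b \<and> fst u \<bullet> b \<le> 1) \<and> 0 \<le> snd u \<and> snd u \<le> 1"
  unfolding unitc_def by (simp add: ball_Basis_prod inner_fst inner_snd)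

lemma grid_prod: "(u::'a::euclidean_space \<times> real) \<in> grid n \<longleftrightarrow>
   (\<forall>b\<in>Basis. \<exists>k::nat. k \<le> 2^n \<and> fst u \<bullet> b = real k / 2^n) \<and> (\<exists>k::nat. k \<le> 2^n \<and> snd u = real k / 2^n)"
  unfolding grid_def by (simp add: ball_Basis_prod inner_fst inner_snd)

lemma coord_close_prod: "(\<forall>c\<in>(Basis :: ('a::euclidean_space \<times> real) set). \<bar>u \<bullet> c - v \<bullet> c\<bar> \<le> e) \<longleftrightarrow>
   (\<forall>b\<in>Basis. \<bar>fst u \<bullet> b - fst v \<bullet> b\<bar> \<le> e) \<and> \<bar>snd u - snd v\<bar> \<le> e"
  by (simp add: ball_Basis_prod inner_fst inner_snd)

lemma int_grid: fixes z :: int and n :: nat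
  assumes "0 \<le> z" "z \<le> 2^n" shows "\<exists>k::nat. k \<le> 2^n \<and> real_of_int z / 2^n = real k / 2^n"
  using assms by (intro exI[of _ "nat z"]) (auto simp: nat_le_iff)

locale kolm =
  fixes M :: "'b measure" and X :: "real \<Rightarrow> 'a::euclidean_space \<Rightarrow> 'b \<Rightarrow> real"
    and x0 :: 'a and A T p \<gamma> \<beta> \<theta> :: real
  assumes prob: "prob_space M"
    and A: "A > 0" and T: "T > 0"
    and hp: "p > real DIM('a) + 1"
    and h\<gamma>: "0 < \<gamma>" and h\<beta>: "0 < \<beta>"
    and hp\<gamma>: "p * \<gamma> > real DIM('a) + 1"
    and hp\<beta>: "p * \<beta> > real DIM('a) + 1"
    and h\<theta>: "\<theta> > \<gamma>"
    and meas: "\<forall>t\<in>{0..T}. \<forall>x. X t x \<in> borel_measurable M"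
    and h0: "(\<integral>\<^sup>+ \<omega>. ennreal (\<bar>X 0 x0 \<omega>\<bar> powr p) \<partial>M) \<le> ennreal A"
    and hx: "\<forall>t\<in>{0..T}. \<forall>x y. (\<integral>\<^sup>+ \<omega>. ennreal (\<bar>X t x \<omega> - X t y \<omega>\<bar> powr p) \<partial>M)
                        \<le> ennreal (A * norm (x - y) powr (\<gamma> * p))"
    and ht: "\<forall>t\<in>{0..T}. \<forall>s\<in>{0..T}. \<forall>x. (\<integral>\<^sup>+ \<omega>. ennreal (\<bar>X t x \<omega> - X s x \<omega>\<bar> powr p) \<partial>M)
                        \<le> ennreal (A * \<bar>t - s\<bar> powr (\<beta> * p))"
begin

definition "tm u = T * snd (u :: 'a \<times> real)"
definition "sp j u = x0 + (2^(j+1)) *\<^sub>R fst (u :: 'a \<times> real) - (2^j) *\<^sub>R One"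
definition "Z j u = X (tm u) (sp j u)"
definition "psi j t x = (((\<Sum>b\<in>Basis. (((x - x0) \<bullet> b + 2^j) / 2^(j+1)) *\<^sub>R b), t / T) :: 'a \<times> real)"
definition "Cb j = {x. \<forall>b\<in>Basis. \<bar>(x - x0) \<bullet> b\<bar> \<le> 2^j}"
definition "ta k t = T * (of_int \<lfloor>2^k * (t / T)\<rfloor> / 2^k)"
definition "xa k x = x0 + (\<Sum>b\<in>Basis. (of_int \<lfloor>2^k * ((x - x0) \<bullet> b)\<rfloor> / 2^k) *\<^sub>R b)"

lemma psi_fst_inner: "b \<in> Basis \<Longrightarrow> fst (psi j t x) \<bullet> b = ((x - x0) \<bullet> b + 2^j) / 2^(j+1)"
  by (simp add: psi_def inner_sum_left_Basis)

lemma psi_snd: "snd (psi j t x) = t / T" by (simp add: psi_def)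

lemma tm_psi: "tm (psi j t x) = t" using T by (simp add: tm_def psi_def)

lemma sp_psi: "sp j (psi j t x) = x"
proof (rule euclidean_eqI)
  fix b :: 'a assume b: "b \<in> Basis"
  have "sp j (psi j t x) \<bullet> b = x0 \<bullet> b + 2^(j+1) * (((x - x0) \<bullet> b + 2^j) / 2^(j+1)) - 2^j"
    using b by (simp add: sp_def inner_diff_left inner_add_left psi_fst_inner)
  also have "\<dots> = x \<bullet> b" by (simp add: inner_diff_left)
  finally show "sp j (psi j t x) \<bullet> b = x \<bullet> b" .
qed

lemma xa_inner: "b \<in> Basis \<Longrightarrow> (xa k x - x0) \<bullet> b = of_int \<lfloor>2^k * ((x - x0) \<bullet> b)\<rfloor> / 2^k"
  by (simp add: xa_def inner_sum_left_Basis)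

lemma psi_unitc: assumes "t \<in> {0..T}" "x \<in> Cb j" shows "psi j t x \<in> unitc"
  unfolding unitc_prod
proof (intro conjI ballI)
  fix b :: 'a assume b: "b \<in> Basis"
  have "\<bar>(x - x0) \<bullet> b\<bar> \<le> 2^j" using assms b by (auto simp: Cb_def)
  then show "0 \<le> fst (psi j t x) \<bullet> b" "fst (psi j t x) \<bullet> b \<le> 1"
    using b by (auto simp: psi_fst_inner field_simps)
next
  show "0 \<le> snd (psi j t x)" "snd (psi j t x) \<le> 1" using assms T by (auto simp: psi_snd field_simps)
qed

lemma ta_range: assumes "t \<in> {0..T}" shows "ta k t \<in> {0..T}"
proof -
  have t: "0 \<le> t / T" "t / T \<le> 1" using assms T by auto
  have "0 \<le> (2::real)^k * (t / T)" using t(1) by (rule mult_nonneg_nonneg[rotated]) simp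
  then have f0: "0 \<le> \<lfloor>2^k * (t / T)\<rfloor>" by simp
  have "(2::real)^k * (t / T) \<le> 2^k * 1" using t by (intro mult_left_mono) auto
  then have "\<lfloor>2^k * (t / T)\<rfloor> \<le> \<lfloor>(2::real)^k\<rfloor>" by (intro floor_mono) simp
  then have f1: "real_of_int \<lfloor>2^k * (t / T)\<rfloor> \<le> 2^k" by (metis floor_of_nat of_int_floor_le of_int_le_iff of_nat_numeral of_nat_power order.trans)
  show ?thesis using f0 f1 T by (auto simp: ta_def field_simps)
qed

lemma xa_Cb: assumes "x \<in> Cb j" shows "xa k x \<in> Cb j"
  unfolding Cb_def
proof (intro CollectI ballI)
  fix b :: 'a assume b: "b \<in> Basis"
  define y where "y = (x - x0) \<bullet> b"
  have y: "-(2^j) \<le> y" "y \<le> 2^j" using assms b by (auto simp: Cb_def y_def)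
  have lo: "- (2^(k+j)) \<le> \<lfloor>2^k * y\<rfloor>"
  proof -
    have e: "(2::real)^k * (-(2^j)) = of_int (-(2^(k+j)))" by (simp add: power_add)
    have "(- (2^(k+j)) :: int) = \<lfloor>2^k * (-(2^j)) :: real\<rfloor>" by (simp only: e floor_of_int)
    also have "\<dots> \<le> \<lfloor>2^k * y\<rfloor>" using y by (intro floor_mono mult_left_mono) auto
    finally show ?thesis .
  qed
  have hi: "\<lfloor>2^k * y\<rfloor> \<le> 2^(k+j)"
  proof -
    have e: "(2::real)^k * (2^j) = of_int (2^(k+j))" by (simp add: power_add)
    have "\<lfloor>2^k * y\<rfloor> \<le> \<lfloor>2^k * (2^j) :: real\<rfloor>" using y by (intro floor_mono mult_left_mono) auto
    also have "\<lfloor>(2::real)^k * (2^j)\<rfloor> = 2^(k+j)" by (simp only: e floor_of_int)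
    finally show ?thesis .
  qed
  have "\<bar>real_of_int \<lfloor>2^k * y\<rfloor>\<bar> \<le> 2^(k+j)"
  proof -
    have "\<bar>\<lfloor>2^k * y\<rfloor>\<bar> \<le> 2^(k+j)" using lo hi by linarith
    then have "real_of_int \<bar>\<lfloor>2^k * y\<rfloor>\<bar> \<le> real_of_int (2^(k+j))" by (rule of_int_le_iff[THEN iffD2])
    then show ?thesis by simp
  qed
  then show "\<bar>(xa k x - x0) \<bullet> b\<bar> \<le> 2^j" using b
    by (simp add: xa_inner y_def[symmetric] power_add field_simps)
qed

end


lemma frac_close: "\<bar>(of_int \<lfloor>z\<rfloor> - z) / (2::real)^k\<bar> \<le> 1 / 2^k"
proof -
  have "\<bar>of_int \<lfloor>z\<rfloor> - z\<bar> \<le> 1" by linarith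
  then have "\<bar>of_int \<lfloor>z\<rfloor> - z\<bar> / (2::real)^k \<le> 1 / 2^k" by (intro divide_right_mono) auto
  then show ?thesis by (simp add: abs_divide)
qed

context kolm begin

lemma floor_t_bounds: assumes "t \<in> {0..T}"
  shows "0 \<le> \<lfloor>2^k * (t / T)\<rfloor>" "\<lfloor>2^k * (t / T)\<rfloor> \<le> 2^k"
proof -
  have t: "0 \<le> t / T" "t / T \<le> 1" using assms T by auto
  have "0 \<le> (2::real)^k * (t / T)" using t(1) by (rule mult_nonneg_nonneg[rotated]) simp
  then show "0 \<le> \<lfloor>2^k * (t / T)\<rfloor>" by simp
  have "(2::real)^k * (t / T) \<le> 2^k * 1" using t by (intro mult_left_mono) auto
  then have "\<lfloor>2^k * (t / T)\<rfloor> \<le> \<lfloor>(2::real)^k\<rfloor>" by (intro floor_mono) simp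
  also have "\<lfloor>(2::real)^k\<rfloor> = 2^k" by (metis floor_of_int of_int_numeral of_int_power)
  finally show "\<lfloor>2^k * (t / T)\<rfloor> \<le> 2^k" .
qed

lemma floor_x_bounds: assumes "x \<in> Cb j" "b \<in> Basis"
  shows "- (2^(k+j)) \<le> \<lfloor>2^k * ((x - x0) \<bullet> b)\<rfloor>" "\<lfloor>2^k * ((x - x0) \<bullet> b)\<rfloor> \<le> 2^(k+j)"
proof -
  define y where "y = (x - x0) \<bullet> b"
  have y: "-(2^j) \<le> y" "y \<le> 2^j" using assms by (auto simp: Cb_def y_def)
  have e1: "(2::real)^k * (-(2^j)) = of_int (-(2^(k+j)))" by (simp add: power_add)
  have "(- (2^(k+j)) :: int) = \<lfloor>2^k * (-(2^j)) :: real\<rfloor>" by (simp only: e1 floor_of_int)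
  also have "\<dots> \<le> \<lfloor>2^k * y\<rfloor>" using y by (intro floor_mono mult_left_mono) auto
  finally show "- (2^(k+j)) \<le> \<lfloor>2^k * ((x - x0) \<bullet> b)\<rfloor>" by (simp add: y_def)
  have e: "(2::real)^k * (2^j) = of_int (2^(k+j))" by (simp add: power_add)
  have "\<lfloor>2^k * y\<rfloor> \<le> \<lfloor>2^k * (2^j) :: real\<rfloor>" using y by (intro floor_mono mult_left_mono) auto
  also have "\<lfloor>(2::real)^k * (2^j)\<rfloor> = 2^(k+j)" by (simp only: e floor_of_int)
  finally show "\<lfloor>2^k * ((x - x0) \<bullet> b)\<rfloor> \<le> 2^(k+j)" by (simp add: y_def)
qed

lemma approx_grid: assumes t: "t \<in> {0..T}" and x: "x \<in> Cb j"
  shows "psi j (ta k t) (xa k x) \<in> grid (k+j+1)"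
  unfolding grid_prod
proof (intro conjI ballI)
  fix b :: 'a assume b: "b \<in> Basis"
  define z where "z = \<lfloor>2^k * ((x - x0) \<bullet> b)\<rfloor> + 2^(k+j)"
  have z: "0 \<le> z" "z \<le> 2^(k+j+1)" using floor_x_bounds[OF x b, of k] by (auto simp: z_def)
  have "fst (psi j (ta k t) (xa k x)) \<bullet> b = (of_int \<lfloor>2^k * ((x - x0) \<bullet> b)\<rfloor> / 2^k + 2^j) / 2^(j+1)"
    using b by (simp add: psi_fst_inner xa_inner)
  also have "\<dots> = real_of_int z / 2^(k+j+1)"
    by (simp add: z_def power_add field_simps)
  finally show "\<exists>k'::nat. k' \<le> 2^(k+j+1) \<and> fst (psi j (ta k t) (xa k x)) \<bullet> b = real k' / 2^(k+j+1)"
    using int_grid[OF z] by simp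
next
  define z where "z = \<lfloor>2^k * (t / T)\<rfloor> * 2^(j+1)"
  have z: "0 \<le> z" "z \<le> 2^(k+j+1)" using floor_t_bounds[OF t, of k] by (auto simp: z_def power_add)
  have "snd (psi j (ta k t) (xa k x)) = of_int \<lfloor>2^k * (t / T)\<rfloor> / 2^k"
    using T by (simp add: psi_snd ta_def)
  also have "\<dots> = real_of_int z / 2^(k+j+1)"
    by (simp add: z_def power_add field_simps)
  finally show "\<exists>k'::nat. k' \<le> 2^(k+j+1) \<and> snd (psi j (ta k t) (xa k x)) = real k' / 2^(k+j+1)"
    using int_grid[OF z] by simp
qed

lemma approx_dyad: "t \<in> {0..T} \<Longrightarrow> x \<in> Cb j \<Longrightarrow> psi j (ta k t) (xa k x) \<in> dyad"
  unfolding dyad_def using approx_grid by blast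

lemma Z_psi: "Z j (psi j t x) = X t x"
  by (simp add: Z_def tm_psi sp_psi)

lemma ta_close: "t \<in> {0..T} \<Longrightarrow> \<bar>ta k t - t\<bar> \<le> T / 2^k"
proof -
  define D where "D = (of_int \<lfloor>2^k * (t / T)\<rfloor> - 2^k * (t / T)) / (2::real)^k"
  have e: "ta k t - t = T * D"
    using T by (simp add: ta_def D_def field_simps)
  have D: "\<bar>D\<bar> \<le> 1 / 2^k" unfolding D_def by (rule frac_close)
  have "\<bar>ta k t - t\<bar> = T * \<bar>D\<bar>" using T by (simp add: e abs_mult)
  also have "\<dots> \<le> T * (1 / 2^k)" using T D by (intro mult_left_mono) auto
  finally show "\<bar>ta k t - t\<bar> \<le> T / 2^k" by simp
qed

lemma xa_close: "b \<in> Basis \<Longrightarrow> \<bar>(xa k x - x) \<bullet> b\<bar> \<le> 1 / 2^k"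
proof -
  assume b: "b \<in> Basis"
  define y where "y = (x - x0) \<bullet> b"
  have a: "of_int \<lfloor>2^k * y\<rfloor> \<le> 2^k * y" "2^k * y < of_int \<lfloor>2^k * y\<rfloor> + 1" by linarith+
  have "(xa k x - x) \<bullet> b = (xa k x - x0) \<bullet> b - y" by (simp add: y_def inner_diff_left)
  also have "\<dots> = (of_int \<lfloor>2^k * y\<rfloor> - 2^k * y) / 2^k" using b by (simp add: xa_inner y_def field_simps)
  finally have e: "(xa k x - x) \<bullet> b = (of_int \<lfloor>2^k * y\<rfloor> - 2^k * y) / 2^k" .
  show ?thesis unfolding e by (rule frac_close)
qed

lemma psi_coord: "b \<in> Basis \<Longrightarrow> fst (psi j t x) \<bullet> b - fst (psi j t' x') \<bullet> b = ((x - x') \<bullet> b) / 2^(j+1)"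
  by (simp add: psi_fst_inner inner_diff_left field_simps)

lemma psi_snd_diff: "snd (psi j t x) - snd (psi j t' x') = (t - t') / T"
  by (simp add: psi_snd diff_divide_distrib)

end


context kolm begin

definition "eta = min (\<gamma> * p) (\<beta> * p)"
definition "Ne = real DIM('a \<times> real)"
definition "eps = (eta - Ne) / (2 * p)"
definition "Kc j = A * (2 powr (real (j+1) * \<gamma> * p) + T powr (\<beta> * p))"
definition "S j = Sx p eps (Z j)"

lemma Ne_eq: "Ne = real DIM('a) + 1" by (simp add: Ne_def)
lemma p_pos: "p > 0" using hp by linarith
lemma eta_gt: "eta > Ne" using hp\<gamma> hp\<beta> by (simp add: eta_def Ne_eq mult.commute)
lemma eps_pos: "eps > 0" using eta_gt p_pos by (simp add: eps_def)
lemma Kc_nonneg: "Kc j \<ge> 0" using A by (simp add: Kc_def)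

lemma tm_range: "u \<in> unitc \<Longrightarrow> tm u \<in> {0..T}"
  using T by (auto simp: unitc_prod tm_def mult_le_cancel_left1)

lemma Z_meas: "u \<in> unitc \<Longrightarrow> Z j u \<in> borel_measurable M"
  using meas tm_range by (simp add: Z_def)

lemma pow_split: "(2^(j+1) * (1 / 2^n)) powr a = 2 powr (real (j+1) * a) * 2 powr (- real n * a)"
proof -
  have a: "2 powr real (j+1) = (2::real)^(j+1)" by (rule powr_realpow) simp
  have b: "2 powr (- real n) = 1 / (2::real)^n" by (simp add: powr_minus powr_realpow divide_inverse)
  have "(2::real)^(j+1) * (1 / 2^n) = 2 powr (real (j+1)) * 2 powr (- real n)"
    by (simp only: a b)
  then have "((2::real)^(j+1) * (1 / 2^n)) powr a = (2 powr (real (j+1))) powr a * (2 powr (- real n)) powr a"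
    by (simp add: powr_mult del: of_nat_Suc)
  also have "\<dots> = 2 powr (real (j+1) * a) * 2 powr (- real n * a)" by (simp add: powr_powr del: of_nat_Suc)
  finally show ?thesis .
qed

lemma inc_bound:
  assumes uc: "(u, c) \<in> idx n"
  shows "(\<integral>\<^sup>+\<omega>. ennreal (\<bar>Z j (u + (1/2^n) *\<^sub>R c) \<omega> - Z j u \<omega>\<bar> powr p) \<partial>M) \<le> ennreal (Kc j * 2 powr (- real n * eta))"
proof -
  have u1: "u \<in> unitc" and u2: "u + (1/2^n) *\<^sub>R c \<in> unitc" using idx_unitc[OF uc] by auto
  have c: "c \<in> Basis" using uc by (auto simp: idx_def)
  have etag: "eta \<le> \<gamma> * p" "eta \<le> \<beta> * p" by (auto simp: eta_def)
  have mono_g: "2 powr (- real n * (\<gamma> * p)) \<le> 2 powr (- real n * eta)"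
    using etag by (intro powr_mono) (auto simp: mult_left_mono)
  have mono_b: "2 powr (- real n * (\<beta> * p)) \<le> 2 powr (- real n * eta)"
    using etag by (intro powr_mono) (auto simp: mult_left_mono)
  from c consider (sp) b where "b \<in> Basis" "c = (b, 0)" | (ti) "c = (0, 1)" by (auto simp: Basis_prod_real)
  then show ?thesis
  proof cases
    case sp
    have tmeq: "tm (u + (1/2^n) *\<^sub>R c) = tm u" by (simp add: tm_def sp)
    have speq: "sp j (u + (1/2^n) *\<^sub>R c) = sp j u + (2^(j+1) * (1/2^n)) *\<^sub>R b"
      by (simp add: sp_def sp(2) algebra_simps)
    have nb: "norm b = 1" using sp(1) by simp
    have "(\<integral>\<^sup>+\<omega>. ennreal (\<bar>Z j (u + (1/2^n) *\<^sub>R c) \<omega> - Z j u \<omega>\<bar> powr p) \<partial>M)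
       = (\<integral>\<^sup>+\<omega>. ennreal (\<bar>X (tm u) (sp j u + (2^(j+1) * (1/2^n)) *\<^sub>R b) \<omega> - X (tm u) (sp j u) \<omega>\<bar> powr p) \<partial>M)"
      by (simp add: Z_def tmeq speq)
    also have "\<dots> \<le> ennreal (A * norm ((2^(j+1) * (1/2^n)) *\<^sub>R b) powr (\<gamma> * p))"
      using hx[rule_format, OF tm_range[OF u1], of "sp j u + (2^(j+1) * (1/2^n)) *\<^sub>R b" "sp j u"] by simp
    also have "A * norm ((2^(j+1) * (1/2^n)) *\<^sub>R b) powr (\<gamma> * p) = A * 2 powr (real (j+1) * (\<gamma> * p)) * 2 powr (- real n * (\<gamma> * p))"
    proof -
      have nrm: "norm ((2^(j+1) * (1/2^n)) *\<^sub>R b) = 2^(j+1) * (1/(2::real)^n)" using nb by simp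
      show ?thesis unfolding nrm pow_split by (simp only: mult.assoc)
    qed
    also have "\<dots> \<le> A * 2 powr (real (j+1) * (\<gamma> * p)) * 2 powr (- real n * eta)"
      using A mono_g by (intro mult_left_mono) auto
    also have "\<dots> \<le> Kc j * 2 powr (- real n * eta)"
      using A T by (intro mult_right_mono) (auto simp: Kc_def mult.assoc del: of_nat_Suc)
    finally show ?thesis by (simp add: ennreal_leI)
  next
    case ti
    have tmeq: "tm (u + (1/2^n) *\<^sub>R c) = tm u + T * (1/2^n)" by (simp add: tm_def ti algebra_simps)
    have speq: "sp j (u + (1/2^n) *\<^sub>R c) = sp j u" by (simp add: sp_def ti)
    have r1: "tm u + T * (1/2^n) \<in> {0..T}" using tm_range[OF u2] tmeq by simp
    have "(\<integral>\<^sup>+\<omega>. ennreal (\<bar>Z j (u + (1/2^n) *\<^sub>R c) \<omega> - Z j u \<omega>\<bar> powr p) \<partial>M)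
       = (\<integral>\<^sup>+\<omega>. ennreal (\<bar>X (tm u + T * (1/2^n)) (sp j u) \<omega> - X (tm u) (sp j u) \<omega>\<bar> powr p) \<partial>M)"
      by (simp add: Z_def tmeq speq)
    also have "\<dots> \<le> ennreal (A * \<bar>(tm u + T * (1/2^n)) - tm u\<bar> powr (\<beta> * p))"
      using ht[rule_format, OF r1 tm_range[OF u1], of "sp j u"] .
    also have "A * \<bar>(tm u + T * (1/2^n)) - tm u\<bar> powr (\<beta> * p) = A * T powr (\<beta> * p) * 2 powr (- real n * (\<beta> * p))"
    proof -
      have "\<bar>(tm u + T * (1/2^n)) - tm u\<bar> = T * 2 powr (- real n)"
        using T by (simp add: powr_minus powr_realpow divide_inverse)
      then show ?thesis using T by (simp add: powr_mult powr_powr)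
    qed
    also have "\<dots> \<le> A * T powr (\<beta> * p) * 2 powr (- real n * eta)"
      using A mono_b by (intro mult_left_mono) auto
    also have "\<dots> \<le> Kc j * 2 powr (- real n * eta)"
      using A T by (intro mult_right_mono) (auto simp: Kc_def)
    finally show ?thesis by (simp add: ennreal_leI)
  qed
qed

definition "C1 = Ne * 2 ^ DIM('a \<times> real) / (1 - 2 powr (-(eta - Ne)/2))"

lemma S_int: "(\<integral>\<^sup>+\<omega>. S j \<omega> \<partial>M) \<le> ennreal (Kc j * C1)"
proof -
  have "(\<integral>\<^sup>+\<omega>. Sx p ((eta - DIM('a \<times> real)) / (2*p)) (Z j) \<omega> \<partial>M)
     \<le> ennreal (Kc j * DIM('a \<times> real) * 2^DIM('a \<times> real) / (1 - 2 powr (-(eta - DIM('a \<times> real))/2)))"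
    by (rule unit_prob[OF p_pos Kc_nonneg _ Z_meas inc_bound]) (use eta_gt in \<open>simp_all add: Ne_def\<close>)
  then show ?thesis by (simp add: S_def eps_def C1_def Ne_def mult.assoc)
qed

lemma S_meas: "S j \<in> borel_measurable M"
  unfolding S_def by (rule Sx_measurable) (rule Z_meas)

end


context kolm begin

definition "E = {\<omega> \<in> space M. \<forall>j. S j \<omega> \<noteq> \<infinity>}"
definition "Y t x \<omega> = (if \<omega> \<in> E then lim (\<lambda>k. X (ta k t) (xa k x) \<omega>) else 0)"
definition "qq = 2 powr (- eps)"
definition "rho j \<omega> m = 3 * (Ne * ((enn2real (S j \<omega>)) powr (1/p) * qq^m / (1 - qq)))"
definition "Osc j \<omega> = 3 * (Ne * ((enn2real (S j \<omega>)) powr (1/p) / (1 - qq)))"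

lemma qq: "0 < qq" "qq < 1"
proof -
  show "0 < qq" by (simp add: qq_def)
  have "2 powr (- eps) < 2 powr (0::real)" using eps_pos by (intro powr_less_mono) auto
  then show "qq < 1" by (simp add: qq_def)
qed

lemma E_sets: "E \<in> sets M"
proof -
  have [measurable]: "S j \<in> borel_measurable M" for j by (rule S_meas)
  show ?thesis unfolding E_def by measurable
qed

lemma AE_E: "AE \<omega> in M. \<omega> \<in> E"
proof -
  have "AE \<omega> in M. S j \<omega> \<noteq> \<infinity>" for j
  proof (rule nn_integral_noteq_infinite[OF S_meas])
    have "integral\<^sup>N M (S j) \<le> ennreal (Kc j * C1)" by (rule S_int)
    then show "integral\<^sup>N M (S j) \<noteq> \<infinity>" by (auto simp: top_unique)
  qed
  then have "AE \<omega> in M. \<forall>j. S j \<omega> \<noteq> \<infinity>" by (simp add: AE_all_countable)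
  with AE_space show ?thesis by eventually_elim (auto simp: E_def)
qed

lemma Z_modulus:
  assumes "\<omega> \<in> E" "w \<in> dyad" "w' \<in> dyad" "\<forall>c\<in>Basis. \<bar>w \<bullet> c - w' \<bullet> c\<bar> \<le> 1/2^m"
  shows "\<bar>Z j w \<omega> - Z j w' \<omega>\<bar> \<le> rho j \<omega> m"
proof -
  have fin: "Sx p eps (Z j) \<omega> \<noteq> \<infinity>" using assms(1) by (simp add: E_def S_def[symmetric])
  from dyad_modulus[OF p_pos eps_pos fin assms(2-4)] show ?thesis
    by (simp add: rho_def qq_def Ne_def S_def)
qed

lemma Z_osc:
  assumes "\<omega> \<in> E" "w \<in> dyad"
  shows "\<bar>Z j w \<omega> - Z j 0 \<omega>\<bar> \<le> Osc j \<omega>"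
proof -
  have fin: "Sx p eps (Z j) \<omega> \<noteq> \<infinity>" using assms(1) by (simp add: E_def S_def[symmetric])
  from dyad_osc[OF p_pos eps_pos fin assms(2)] show ?thesis
    by (simp add: Osc_def qq_def Ne_def S_def)
qed

lemma rho_tendsto: "(\<lambda>m. rho j \<omega> m) \<longlonglongrightarrow> 0"
proof -
  have "(\<lambda>m. 3 * (Ne * ((enn2real (S j \<omega>)) powr (1/p) * qq^m / (1 - qq)))) \<longlonglongrightarrow> 3 * (Ne * ((enn2real (S j \<omega>)) powr (1/p) * 0 / (1 - qq)))"
    using qq by (intro tendsto_intros LIMSEQ_power_zero) auto
  then show ?thesis by (simp add: rho_def[abs_def])
qed

lemma inv_pow_mono: "m \<le> k \<Longrightarrow> 1 / (2::real)^k \<le> 1 / 2^m"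
  by (simp add: frac_le power_increasing)

lemma approx_close:
  assumes t: "t \<in> {0..T}" "t' \<in> {0..T}" and x: "x \<in> Cb j" "x' \<in> Cb j"
    and k: "m+2 \<le> k" "m+2 \<le> k'"
    and ct: "\<bar>t - t'\<bar> \<le> T / 2^(m+1)" and cx: "\<forall>b\<in>Basis. \<bar>(x - x') \<bullet> b\<bar> \<le> 1 / 2^(m+1)"
  shows "\<forall>c\<in>Basis. \<bar>psi j (ta k t) (xa k x) \<bullet> c - psi j (ta k' t') (xa k' x') \<bullet> c\<bar> \<le> 1/2^m"
  unfolding coord_close_prod
proof (intro conjI ballI)
  have i1: "1 / (2::real)^k \<le> 1 / 2^(m+2)" "1 / (2::real)^k' \<le> 1 / 2^(m+2)"
    using inv_pow_mono[OF k(1)] inv_pow_mono[OF k(2)] by auto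
  have sum: "1 / (2::real)^(m+2) + 1 / 2^(m+1) + 1 / 2^(m+2) = 1 / 2^m" by (simp add: field_simps)
  fix b :: 'a assume b: "b \<in> Basis"
  have "\<bar>fst (psi j (ta k t) (xa k x)) \<bullet> b - fst (psi j (ta k' t') (xa k' x')) \<bullet> b\<bar>
      = \<bar>(xa k x - xa k' x') \<bullet> b\<bar> / 2^(j+1)" using b by (simp add: psi_coord abs_divide)
  also have "\<dots> \<le> \<bar>(xa k x - xa k' x') \<bullet> b\<bar>"
  proof -
    have "\<bar>(xa k x - xa k' x') \<bullet> b\<bar> / 2^(j+1) \<le> \<bar>(xa k x - xa k' x') \<bullet> b\<bar> / 1"
      by (rule divide_left_mono) (auto simp del: power_Suc)
    then show ?thesis by simp
  qed
  also have "(xa k x - xa k' x') \<bullet> b = (xa k x - x) \<bullet> b + (x - x') \<bullet> b - (xa k' x' - x') \<bullet> b"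
    by (simp add: inner_diff_left)
  also have "\<bar>\<dots>\<bar> \<le> 1 / 2^k + 1 / 2^(m+1) + 1 / 2^k'"
    using xa_close[OF b, of k x] xa_close[OF b, of k' x'] cx b by (smt (verit))
  also have "\<dots> \<le> 1 / 2^m" using i1 sum by linarith
  finally show "\<bar>fst (psi j (ta k t) (xa k x)) \<bullet> b - fst (psi j (ta k' t') (xa k' x')) \<bullet> b\<bar> \<le> 1 / 2 ^ m" .
next
  have i1: "T / (2::real)^k \<le> T / 2^(m+2)" "T / (2::real)^k' \<le> T / 2^(m+2)"
    using mult_left_mono[OF inv_pow_mono[OF k(1)], of T] mult_left_mono[OF inv_pow_mono[OF k(2)], of T] T
    by auto
  have sum: "T / (2::real)^(m+2) + T / 2^(m+1) + T / 2^(m+2) = T / 2^m" by (simp add: field_simps)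
  have "\<bar>ta k t - ta k' t'\<bar> \<le> T / 2^k + T / 2^(m+1) + T / 2^k'"
    using ta_close[OF t(1), of k] ta_close[OF t(2), of k'] ct by linarith
  also have "\<dots> \<le> T / 2^m" using i1 sum by linarith
  finally have "\<bar>ta k t - ta k' t'\<bar> / T \<le> 1 / 2^m" using T by (simp add: divide_le_eq field_simps)
  then show "\<bar>snd (psi j (ta k t) (xa k x)) - snd (psi j (ta k' t') (xa k' x'))\<bar> \<le> 1 / 2 ^ m"
    by (simp add: psi_snd_diff abs_divide T[THEN less_imp_le] abs_of_nonneg)
qed

end


context kolm begin

lemma Cb_big: assumes "norm (x - x0) \<le> 2^j" shows "x \<in> Cb j"
  using assms Basis_le_norm[of _ "x - x0"] by (auto simp: Cb_def intro: order.trans)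

lemma in_some_Cb: "\<exists>j. x \<in> Cb j"
proof -
  obtain j where "norm (x - x0) < (2::real)^j" using real_arch_pow[of 2 "norm (x - x0)"] by auto
  then show ?thesis using Cb_big by (meson less_imp_le)
qed

lemma rho_small: "e > 0 \<Longrightarrow> \<exists>m. rho j \<omega> m < e"
  using order_tendstoD(2)[OF rho_tendsto[of j \<omega>], of e] by (auto simp: eventually_sequentially)

lemma Z_approx: "X (ta k t) (xa k x) \<omega> = Z j (psi j (ta k t) (xa k x)) \<omega>"
  by (simp add: Z_psi)

lemma approx_diff:
  assumes \<omega>: "\<omega> \<in> E" and t: "t \<in> {0..T}" "t' \<in> {0..T}" and x: "x \<in> Cb j" "x' \<in> Cb j"
    and k: "m+2 \<le> k" "m+2 \<le> k'"
    and ct: "\<bar>t - t'\<bar> \<le> T / 2^(m+1)" and cx: "\<forall>b\<in>Basis. \<bar>(x - x') \<bullet> b\<bar> \<le> 1 / 2^(m+1)"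
  shows "\<bar>X (ta k t) (xa k x) \<omega> - X (ta k' t') (xa k' x') \<omega>\<bar> \<le> rho j \<omega> m"
  unfolding Z_approx[of k t x \<omega> j] Z_approx[of k' t' x' \<omega> j]
  by (rule Z_modulus[OF \<omega> approx_dyad[OF t(1) x(1)] approx_dyad[OF t(2) x(2)] approx_close[OF t x k ct cx]])

lemma approx_conv:
  assumes \<omega>: "\<omega> \<in> E" and t: "t \<in> {0..T}"
  shows "convergent (\<lambda>k. X (ta k t) (xa k x) \<omega>)"
proof -
  obtain j where x: "x \<in> Cb j" using in_some_Cb by blast
  have "Cauchy (\<lambda>k. X (ta k t) (xa k x) \<omega>)"
  proof (rule metric_CauchyI)
    fix e :: real assume e: "0 < e"
    obtain m where m: "rho j \<omega> m < e" using rho_small[OF e] by blast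
    have "\<forall>k\<ge>m+2. \<forall>k'\<ge>m+2. dist (X (ta k t) (xa k x) \<omega>) (X (ta k' t) (xa k' x) \<omega>) < e"
    proof (intro allI impI)
      fix k k' assume k: "m+2 \<le> k" "m+2 \<le> k'"
      have "\<bar>X (ta k t) (xa k x) \<omega> - X (ta k' t) (xa k' x) \<omega>\<bar> \<le> rho j \<omega> m"
        by (rule approx_diff[OF \<omega> t t x x k]) (use T in auto)
      then show "dist (X (ta k t) (xa k x) \<omega>) (X (ta k' t) (xa k' x) \<omega>) < e" using m by (simp add: dist_real_def)
    qed
    then show "\<exists>M. \<forall>k\<ge>M. \<forall>k'\<ge>M. dist (X (ta k t) (xa k x) \<omega>) (X (ta k' t) (xa k' x) \<omega>) < e" by blast
  qed
  then show ?thesis by (simp add: Cauchy_convergent_iff)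
qed

lemma Y_lim: "\<omega> \<in> E \<Longrightarrow> t \<in> {0..T} \<Longrightarrow> (\<lambda>k. X (ta k t) (xa k x) \<omega>) \<longlonglongrightarrow> Y t x \<omega>"
  using approx_conv[of \<omega> t x] by (simp add: Y_def convergent_LIMSEQ_iff)

lemma Y_mod:
  assumes \<omega>: "\<omega> \<in> E" and t: "t \<in> {0..T}" "t' \<in> {0..T}" and x: "x \<in> Cb j" "x' \<in> Cb j"
    and ct: "\<bar>t - t'\<bar> \<le> T / 2^(m+1)" and cx: "\<forall>b\<in>Basis. \<bar>(x - x') \<bullet> b\<bar> \<le> 1 / 2^(m+1)"
  shows "\<bar>Y t x \<omega> - Y t' x' \<omega>\<bar> \<le> rho j \<omega> m"
proof (rule LIMSEQ_le_const2)
  show "(\<lambda>k. \<bar>X (ta k t) (xa k x) \<omega> - X (ta k t') (xa k x') \<omega>\<bar>) \<longlonglongrightarrow> \<bar>Y t x \<omega> - Y t' x' \<omega>\<bar>"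
    by (intro tendsto_intros Y_lim \<omega> t)
  show "\<exists>N. \<forall>k\<ge>N. \<bar>X (ta k t) (xa k x) \<omega> - X (ta k t') (xa k x') \<omega>\<bar> \<le> rho j \<omega> m"
    using approx_diff[OF \<omega> t x _ _ ct cx] by blast
qed

lemma sp0: "sp j 0 = x0 - (2^j) *\<^sub>R One" by (simp add: sp_def)

lemma Y_osc:
  assumes \<omega>: "\<omega> \<in> E" and t: "t \<in> {0..T}" and x: "x \<in> Cb j"
  shows "\<bar>Y t x \<omega> - X 0 (sp j 0) \<omega>\<bar> \<le> Osc j \<omega>"
proof (rule LIMSEQ_le_const2)
  show "(\<lambda>k. \<bar>X (ta k t) (xa k x) \<omega> - X 0 (sp j 0) \<omega>\<bar>) \<longlonglongrightarrow> \<bar>Y t x \<omega> - X 0 (sp j 0) \<omega>\<bar>"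
    by (intro tendsto_intros Y_lim \<omega> t)
  have "Z j 0 = X 0 (sp j 0)" by (simp add: Z_def tm_def)
  then show "\<exists>N. \<forall>k\<ge>N. \<bar>X (ta k t) (xa k x) \<omega> - X 0 (sp j 0) \<omega>\<bar> \<le> Osc j \<omega>"
    using Z_osc[OF \<omega> approx_dyad[OF t x]] unfolding Z_approx[of _ t x \<omega> j] by metis
qed

lemma Y_meas: assumes t: "t \<in> {0..T}" shows "Y t x \<in> borel_measurable M"
proof -
  have "(\<lambda>\<omega>. lim (\<lambda>k. X (ta k t) (xa k x) \<omega>)) \<in> borel_measurable M"
    by (rule borel_measurable_lim_metric) (use meas ta_range[OF t] in auto)
  then show ?thesis unfolding Y_def[abs_def]
    by (intro measurable_If_set) (auto simp: E_sets sets.Int_space_eq2)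
qed

lemma Y_cont: "continuous_on ({0..T} \<times> UNIV) (\<lambda>(t, x). Y t x \<omega>)"
proof (cases "\<omega> \<in> E")
  case False
  then show ?thesis by (simp add: Y_def case_prod_beta)
next
  case \<omega>: True
  show ?thesis unfolding continuous_on_iff
  proof (intro ballI allI impI)
    fix P e assume P: "P \<in> {0..T} \<times> (UNIV :: 'a set)" and e: "(0::real) < e"
    obtain t x where Pe: "P = (t, x)" by (cases P)
    have t: "t \<in> {0..T}" using P Pe by auto
    obtain j where j: "norm (x - x0) + 1 < (2::real)^j" using real_arch_pow[of 2 "norm (x - x0) + 1"] by auto
    obtain m where m: "rho j \<omega> m < e" using rho_small[OF e] by blast
    define d where "d = min (T / 2^(m+1)) (1 / 2^(m+1))"
    have d: "d > 0" using T by (simp add: d_def)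
    show "\<exists>d>0. \<forall>P'\<in>{0..T} \<times> UNIV. dist P' P < d \<longrightarrow> dist ((\<lambda>(t, x). Y t x \<omega>) P') ((\<lambda>(t, x). Y t x \<omega>) P) < e"
    proof (intro exI[of _ d] conjI d ballI impI)
      fix P' assume P': "P' \<in> {0..T} \<times> (UNIV :: 'a set)" and dP: "dist P' P < d"
      obtain t' x' where Pe': "P' = (t', x')" by (cases P')
      have t': "t' \<in> {0..T}" using P' Pe' by auto
      have dt: "\<bar>t' - t\<bar> < d" using dist_fst_le[of P' P] dP by (simp add: Pe Pe' dist_real_def)
      have dx: "norm (x' - x) < d" using dist_snd_le[of P' P] dP by (simp add: Pe Pe' dist_norm)
      have x: "x \<in> Cb j" by (rule Cb_big) (use j in linarith)
      have "norm (x' - x0) \<le> norm (x' - x) + norm (x - x0)" using norm_triangle_ineq[of "x' - x" "x - x0"] by simp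
      also have "\<dots> \<le> 1 + norm (x - x0)"
      proof -
        have "norm (x' - x) < 1 / 2^(m+1)" using dx by (simp add: d_def)
        also have "(1::real) / 2^(m+1) \<le> 1" using inv_pow_mono[of 0 "m+1"] by simp
        finally show ?thesis by simp
      qed
      finally have x': "x' \<in> Cb j" by (intro Cb_big) (use j in linarith)
      have ct: "\<bar>t' - t\<bar> \<le> T / 2^(m+1)" using dt by (simp add: d_def)
      have dx': "norm (x' - x) < 1 / 2^(m+1)" using dx by (simp add: d_def)
      have cx: "\<forall>b\<in>Basis. \<bar>(x' - x) \<bullet> b\<bar> \<le> 1 / 2^(m+1)"
      proof
        fix b :: 'a assume "b \<in> Basis"
        from Basis_le_norm[OF this, of "x' - x"] dx' show "\<bar>(x' - x) \<bullet> b\<bar> \<le> 1 / 2^(m+1)" by linarith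
      qed
      have "\<bar>Y t' x' \<omega> - Y t x \<omega>\<bar> \<le> rho j \<omega> m" by (rule Y_mod[OF \<omega> t' t x' x ct cx])
      then show "dist ((\<lambda>(t, x). Y t x \<omega>) P') ((\<lambda>(t, x). Y t x \<omega>) P) < e"
        using m by (simp add: Pe Pe' dist_real_def)
    qed
  qed
qed

end


lemma powr_sum2: fixes a b p :: real assumes p: "p > 0"
  shows "\<bar>a + b\<bar> powr p \<le> 2 powr p * (\<bar>a\<bar> powr p + \<bar>b\<bar> powr p)"
proof -
  have "\<bar>a + b\<bar> \<le> 2 * max \<bar>a\<bar> \<bar>b\<bar>" by linarith
  then have "\<bar>a + b\<bar> powr p \<le> (2 * max \<bar>a\<bar> \<bar>b\<bar>) powr p" using p by (intro powr_mono2) auto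
  also have "\<dots> = 2 powr p * (max \<bar>a\<bar> \<bar>b\<bar>) powr p" by (simp add: powr_mult)
  also have "(max \<bar>a\<bar> \<bar>b\<bar>) powr p \<le> \<bar>a\<bar> powr p + \<bar>b\<bar> powr p" by (simp add: max_def)
  finally show ?thesis by (simp add: mult_left_mono)
qed

context kolm begin

lemma approx_L:
  assumes t: "t \<in> {0..T}"
  shows "(\<integral>\<^sup>+\<omega>. ennreal (\<bar>X (ta k t) (xa k x) \<omega> - X t x \<omega>\<bar> powr p) \<partial>M)
    \<le> ennreal (2 powr p * (A * norm (xa k x - x) powr (\<gamma> * p) + A * \<bar>ta k t - t\<bar> powr (\<beta> * p)))"
proof -
  have tk: "ta k t \<in> {0..T}" by (rule ta_range[OF t])
  have m1: "X (ta k t) (xa k x) \<in> borel_measurable M" "X (ta k t) x \<in> borel_measurable M" "X t x \<in> borel_measurable M"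
    using meas tk t by auto
  have "(\<integral>\<^sup>+\<omega>. ennreal (\<bar>X (ta k t) (xa k x) \<omega> - X t x \<omega>\<bar> powr p) \<partial>M)
     \<le> (\<integral>\<^sup>+\<omega>. ennreal (2 powr p) * (ennreal (\<bar>X (ta k t) (xa k x) \<omega> - X (ta k t) x \<omega>\<bar> powr p)
                + ennreal (\<bar>X (ta k t) x \<omega> - X t x \<omega>\<bar> powr p)) \<partial>M)"
  proof (rule nn_integral_mono)
    fix \<omega>
    have "\<bar>X (ta k t) (xa k x) \<omega> - X t x \<omega>\<bar> powr p
       \<le> 2 powr p * (\<bar>X (ta k t) (xa k x) \<omega> - X (ta k t) x \<omega>\<bar> powr p + \<bar>X (ta k t) x \<omega> - X t x \<omega>\<bar> powr p)"
      using powr_sum2[OF p_pos, of "X (ta k t) (xa k x) \<omega> - X (ta k t) x \<omega>" "X (ta k t) x \<omega> - X t x \<omega>"] by simp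
    then show "ennreal (\<bar>X (ta k t) (xa k x) \<omega> - X t x \<omega>\<bar> powr p)
      \<le> ennreal (2 powr p) * (ennreal (\<bar>X (ta k t) (xa k x) \<omega> - X (ta k t) x \<omega>\<bar> powr p)
                + ennreal (\<bar>X (ta k t) x \<omega> - X t x \<omega>\<bar> powr p))"
      by (simp add: ennreal_mult[symmetric] ennreal_plus[symmetric] del: ennreal_plus)
  qed
  also have "\<dots> = ennreal (2 powr p) * ((\<integral>\<^sup>+\<omega>. ennreal (\<bar>X (ta k t) (xa k x) \<omega> - X (ta k t) x \<omega>\<bar> powr p) \<partial>M)
                + (\<integral>\<^sup>+\<omega>. ennreal (\<bar>X (ta k t) x \<omega> - X t x \<omega>\<bar> powr p) \<partial>M))"
    using m1 by (simp add: nn_integral_cmult nn_integral_add)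
  also have "\<dots> \<le> ennreal (2 powr p) * (ennreal (A * norm (xa k x - x) powr (\<gamma> * p)) + ennreal (A * \<bar>ta k t - t\<bar> powr (\<beta> * p)))"
    using hx[rule_format, OF tk, of "xa k x" x] ht[rule_format, OF tk t, of x]
    by (intro mult_left_mono add_mono) auto
  also have "\<dots> = ennreal (2 powr p) * ennreal (A * norm (xa k x - x) powr (\<gamma> * p) + A * \<bar>ta k t - t\<bar> powr (\<beta> * p))"
    using A by (subst ennreal_plus) auto
  also have "\<dots> = ennreal (2 powr p * (A * norm (xa k x - x) powr (\<gamma> * p) + A * \<bar>ta k t - t\<bar> powr (\<beta> * p)))"
    by (rule ennreal_mult[symmetric]) (use A in \<open>auto intro!: add_nonneg_nonneg mult_nonneg_nonneg\<close>)
  finally show ?thesis .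
qed

lemma xa_norm: "norm (xa k x - x) \<le> real DIM('a) / 2^k"
proof -
  have "norm (xa k x - x) \<le> (\<Sum>b\<in>Basis. \<bar>(xa k x - x) \<bullet> b\<bar>)" by (rule norm_le_l1)
  also have "\<dots> \<le> (\<Sum>b\<in>(Basis::'a set). 1 / 2^k)" by (intro sum_mono xa_close)
  finally show ?thesis by simp
qed

lemma approx_L_tendsto:
  assumes t: "t \<in> {0..T}"
  shows "(\<lambda>k. 2 powr p * (A * norm (xa k x - x) powr (\<gamma> * p) + A * \<bar>ta k t - t\<bar> powr (\<beta> * p))) \<longlonglongrightarrow> 0"
proof -
  have inv: "(\<lambda>k. 1 / (2::real)^k) \<longlonglongrightarrow> 0"
    using LIMSEQ_power_zero[of "1/2::real"] by (simp add: power_one_over)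
  have n0: "(\<lambda>k. norm (xa k x - x)) \<longlonglongrightarrow> 0"
  proof (rule tendsto_sandwich[of "\<lambda>_. 0" _ _ "\<lambda>k. real DIM('a) * (1 / 2^k)"])
    show "\<forall>\<^sub>F k in sequentially. 0 \<le> norm (xa k x - x)" by simp
    show "\<forall>\<^sub>F k in sequentially. norm (xa k x - x) \<le> real DIM('a) * (1 / 2^k)" using xa_norm by simp
    show "(\<lambda>k. real DIM('a) * (1 / 2^k)) \<longlonglongrightarrow> 0" using tendsto_mult[OF tendsto_const inv] by simp
  qed simp
  have t0: "(\<lambda>k. \<bar>ta k t - t\<bar>) \<longlonglongrightarrow> 0"
  proof (rule tendsto_sandwich[of "\<lambda>_. 0" _ _ "\<lambda>k. T * (1 / 2^k)"])
    show "\<forall>\<^sub>F k in sequentially. 0 \<le> \<bar>ta k t - t\<bar>" by simp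
    show "\<forall>\<^sub>F k in sequentially. \<bar>ta k t - t\<bar> \<le> T * (1 / 2^k)" using ta_close[OF t] by simp
    show "(\<lambda>k. T * (1 / 2^k)) \<longlonglongrightarrow> 0" using tendsto_mult[OF tendsto_const inv] by simp
  qed simp
  have gp: "0 < \<gamma> * p" "0 < \<beta> * p" using mult_pos_pos[OF h\<gamma> p_pos] mult_pos_pos[OF h\<beta> p_pos] by auto
  have "(\<lambda>k. 2 powr p * (A * norm (xa k x - x) powr (\<gamma> * p) + A * \<bar>ta k t - t\<bar> powr (\<beta> * p)))
     \<longlonglongrightarrow> 2 powr p * (A * 0 + A * 0)"
  proof -
    have l1: "(\<lambda>k. norm (xa k x - x) powr (\<gamma> * p)) \<longlonglongrightarrow> 0"
      by (rule tendsto_zero_powrI[OF n0 tendsto_const]) (use gp in auto)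
    have l2: "(\<lambda>k. \<bar>ta k t - t\<bar> powr (\<beta> * p)) \<longlonglongrightarrow> 0"
      by (rule tendsto_zero_powrI[OF t0 tendsto_const]) (use gp in auto)
    show ?thesis by (intro tendsto_intros l1 l2)
  qed
  then show ?thesis by simp
qed

lemma Y_AE: assumes t: "t \<in> {0..T}" shows "AE \<omega> in M. Y t x \<omega> = X t x \<omega>"
proof -
  have mX: "X t x \<in> borel_measurable M" using meas t by auto
  have mY: "Y t x \<in> borel_measurable M" by (rule Y_meas[OF t])
  have mk: "(\<lambda>\<omega>. ennreal (\<bar>X (ta k t) (xa k x) \<omega> - X t x \<omega>\<bar> powr p)) \<in> borel_measurable M" for k
  proof -
    have [measurable]: "X (ta k t) (xa k x) \<in> borel_measurable M" using meas ta_range[OF t] by auto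
    note [measurable] = mX
    show ?thesis by measurable
  qed
  have "(\<integral>\<^sup>+\<omega>. ennreal (\<bar>Y t x \<omega> - X t x \<omega>\<bar> powr p) \<partial>M)
     \<le> (\<integral>\<^sup>+\<omega>. liminf (\<lambda>k. ennreal (\<bar>X (ta k t) (xa k x) \<omega> - X t x \<omega>\<bar> powr p)) \<partial>M)"
  proof (rule nn_integral_mono_AE)
    show "AE \<omega> in M. ennreal (\<bar>Y t x \<omega> - X t x \<omega>\<bar> powr p) \<le> liminf (\<lambda>k. ennreal (\<bar>X (ta k t) (xa k x) \<omega> - X t x \<omega>\<bar> powr p))"
      using AE_E
    proof eventually_elim
      case (elim \<omega>)
      have "(\<lambda>k. \<bar>X (ta k t) (xa k x) \<omega> - X t x \<omega>\<bar> powr p) \<longlonglongrightarrow> \<bar>Y t x \<omega> - X t x \<omega>\<bar> powr p"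
        by (intro tendsto_powr2 tendsto_intros Y_lim elim t p_pos) auto
      then have L: "(\<lambda>k. ennreal (\<bar>X (ta k t) (xa k x) \<omega> - X t x \<omega>\<bar> powr p)) \<longlonglongrightarrow> ennreal (\<bar>Y t x \<omega> - X t x \<omega>\<bar> powr p)"
        by (rule tendsto_ennrealI)
      show ?case by (subst lim_imp_Liminf[OF _ L]) simp_all
    qed
  qed
  also have "\<dots> \<le> liminf (\<lambda>k. \<integral>\<^sup>+\<omega>. ennreal (\<bar>X (ta k t) (xa k x) \<omega> - X t x \<omega>\<bar> powr p) \<partial>M)"
    by (rule nn_integral_liminf) (rule mk)
  also have "\<dots> \<le> liminf (\<lambda>k. ennreal (2 powr p * (A * norm (xa k x - x) powr (\<gamma> * p) + A * \<bar>ta k t - t\<bar> powr (\<beta> * p))))"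
    by (intro Liminf_mono) (use approx_L[OF t] in auto)
  also have "\<dots> = 0"
    using tendsto_ennrealI[OF approx_L_tendsto[OF t, of x]] by (simp add: lim_imp_Liminf)
  finally have "(\<integral>\<^sup>+\<omega>. ennreal (\<bar>Y t x \<omega> - X t x \<omega>\<bar> powr p) \<partial>M) = 0" by simp
  then have "AE \<omega> in M. ennreal (\<bar>Y t x \<omega> - X t x \<omega>\<bar> powr p) = 0"
    by (subst nn_integral_0_iff_AE[symmetric]) (use mX mY in measurable)
  then show ?thesis
    by eventually_elim (use p_pos in simp)
qed

end


lemma powr_sum3: fixes a b c p :: real assumes p: "p > 0" and abc: "0 \<le> a" "0 \<le> b" "0 \<le> c"
  shows "(a + b + c) powr p \<le> 3 powr p * (a powr p + b powr p + c powr p)"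
proof -
  have "a + b + c \<le> 3 * max a (max b c)" by linarith
  then have "(a + b + c) powr p \<le> (3 * max a (max b c)) powr p" using p abc by (intro powr_mono2) auto
  also have "\<dots> = 3 powr p * (max a (max b c)) powr p" using abc by (simp add: powr_mult)
  also have "(max a (max b c)) powr p \<le> a powr p + b powr p + c powr p" by (simp add: max_def)
  finally show ?thesis by (simp add: mult_left_mono)
qed

context kolm begin

definition "wt x = 1 + norm (x - x0) powr \<theta>"
definition "Jx x = (LEAST j. x \<in> Cb j)"
definition "V j \<omega> = Osc j \<omega> + \<bar>X 0 (sp j 0) \<omega> - X 0 x0 \<omega>\<bar> + \<bar>X 0 x0 \<omega>\<bar>"
definition "Wt j = 2 powr ((real j - 1) * \<theta>)"

lemma theta_pos: "\<theta> > 0" using h\<theta> h\<gamma> by linarith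

lemma Cb_mono: "i \<le> j \<Longrightarrow> Cb i \<subseteq> Cb j"
  unfolding Cb_def using power_increasing[of i j "2::real"] by (auto intro: order.trans)

lemma Cb_norm: "x \<in> Cb j \<Longrightarrow> norm (x - x0) \<le> real DIM('a) * 2^j"
proof -
  assume x: "x \<in> Cb j"
  have "norm (x - x0) \<le> (\<Sum>b\<in>Basis. \<bar>(x - x0) \<bullet> b\<bar>)" by (rule norm_le_l1)
  also have "\<dots> \<le> (\<Sum>b\<in>(Basis::'a set). 2^j)" using x by (intro sum_mono) (auto simp: Cb_def)
  finally show ?thesis by simp
qed

lemma Jx_in: "x \<in> Cb (Jx x)"
  unfolding Jx_def using in_some_Cb[of x] by (rule LeastI_ex)

lemma Jx_min: "Jx x = Suc i \<Longrightarrow> x \<notin> Cb i"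
  unfolding Jx_def using not_less_Least[of i "\<lambda>j. x \<in> Cb j"] by auto

lemma Wt_pos: "Wt j > 0" by (simp add: Wt_def)

lemma wt_ge: "Wt (Jx x) \<le> wt x"
proof (cases "Jx x")
  case 0
  have "2 powr (- \<theta>) \<le> 2 powr (0::real)" using theta_pos by (intro powr_mono) auto
  then have "Wt (Jx x) \<le> 1" by (simp add: Wt_def 0)
  also have "1 \<le> wt x" by (simp add: wt_def)
  finally show ?thesis .
next
  case (Suc i)
  have "x \<notin> Cb i" using Jx_min[OF Suc] .
  then obtain b where b: "b \<in> Basis" "\<bar>(x - x0) \<bullet> b\<bar> > 2^i" by (auto simp: Cb_def not_le)
  have "(2::real)^i \<le> norm (x - x0)" using b Basis_le_norm[of b "x - x0"] by linarith
  then have "((2::real)^i) powr \<theta> \<le> norm (x - x0) powr \<theta>" using theta_pos by (intro powr_mono2) auto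
  moreover have "((2::real)^i) powr \<theta> = Wt (Jx x)"
    by (simp add: Wt_def Suc powr_realpow[symmetric] powr_powr)
  ultimately show ?thesis by (simp add: wt_def)
qed

lemma V_nonneg: "V j \<omega> \<ge> 0"
  by (simp add: V_def Osc_def) (use qq in \<open>auto intro!: add_nonneg_nonneg mult_nonneg_nonneg divide_nonneg_pos simp: Ne_def\<close>)

lemma Y_le_V: assumes t: "t \<in> {0..T}" shows "\<bar>Y t x \<omega>\<bar> \<le> V (Jx x) \<omega>"
proof (cases "\<omega> \<in> E")
  case False then show ?thesis using V_nonneg by (simp add: Y_def)
next
  case True
  have "\<bar>Y t x \<omega> - X 0 (sp (Jx x) 0) \<omega>\<bar> \<le> Osc (Jx x) \<omega>" by (rule Y_osc[OF True t Jx_in])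
  then show ?thesis unfolding V_def by linarith
qed

lemma ratio_le: assumes t: "t \<in> {0..T}" shows "\<bar>Y t x \<omega>\<bar> / wt x \<le> V (Jx x) \<omega> / Wt (Jx x)"
proof -
  have "\<bar>Y t x \<omega>\<bar> / wt x \<le> V (Jx x) \<omega> / wt x"
    using Y_le_V[OF t] by (intro divide_right_mono) (auto simp: wt_def)
  also have "\<dots> \<le> V (Jx x) \<omega> / Wt (Jx x)"
  proof (rule divide_left_mono)
    show "Wt (Jx x) \<le> wt x" by (rule wt_ge)
    show "0 \<le> V (Jx x) \<omega>" by (rule V_nonneg)
    have "0 < wt x" by (simp add: wt_def add_pos_nonneg)
    then show "0 < wt x * Wt (Jx x)" using Wt_pos by simp
  qed
  finally show ?thesis .
qed

end


context kolm begin

definition "c0 = 3 * (Ne / (1 - qq))"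
definition "Bc = c0 powr p * C1 * (2 powr (\<gamma> * p) + T powr (\<beta> * p)) + real DIM('a) powr (\<gamma> * p) + 1"
definition "rr = 2 powr ((\<gamma> - \<theta>) * p)"
definition "Cst = 3 powr p * Bc * 2 powr (\<theta> * p) / (1 - rr)"

lemma c0_nonneg: "c0 \<ge> 0" using qq by (simp add: c0_def Ne_def)
lemma C1_pos: "C1 > 0"
proof -
  have "2 powr (-(eta - Ne)/2) < 2 powr (0::real)" using eta_gt by (intro powr_less_mono) auto
  then show ?thesis by (simp add: C1_def Ne_def)
qed
lemma rr: "0 < rr" "rr < 1"
proof -
  show "0 < rr" by (simp add: rr_def)
  have "(\<gamma> - \<theta>) * p < 0" using h\<theta> p_pos by (simp add: mult_neg_pos)
  then have "2 powr ((\<gamma> - \<theta>) * p) < 2 powr (0::real)" by (intro powr_less_mono) auto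
  then show "rr < 1" by (simp add: rr_def)
qed
lemma Bc_pos: "Bc > 0"
proof -
  have "0 \<le> c0 powr p * C1 * (2 powr (\<gamma> * p) + T powr (\<beta> * p))" using C1_pos by simp
  moreover have "0 \<le> real DIM('a) powr (\<gamma> * p)" by simp
  ultimately show ?thesis unfolding Bc_def by linarith
qed
lemma Cst_pos: "Cst > 0" using Bc_pos rr by (simp add: Cst_def)

lemma Osc_eq: "Osc j \<omega> = c0 * enn2real (S j \<omega>) powr (1/p)"
  by (simp add: Osc_def c0_def)

lemma Osc_pow: "Osc j \<omega> powr p = c0 powr p * enn2real (S j \<omega>)"
proof -
  have "Osc j \<omega> powr p = c0 powr p * (enn2real (S j \<omega>) powr (1/p)) powr p"
    using c0_nonneg by (simp add: Osc_eq powr_mult)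
  also have "(enn2real (S j \<omega>) powr (1/p)) powr p = enn2real (S j \<omega>)"
    using p_pos by (simp add: powr_powr)
  finally show ?thesis .
qed

lemma V_meas: "V j \<in> borel_measurable M"
proof -
  have [measurable]: "S j \<in> borel_measurable M" by (rule S_meas)
  have [measurable]: "X 0 (sp j 0) \<in> borel_measurable M" "X 0 x0 \<in> borel_measurable M" using meas T by auto
  show ?thesis unfolding V_def[abs_def] Osc_def by measurable
qed

lemma sp0_Cb: "sp j 0 \<in> Cb j"
  by (simp add: Cb_def sp0 inner_diff_left)

lemma int_Vp: "(\<integral>\<^sup>+\<omega>. ennreal (V j \<omega> powr p) \<partial>M)
   \<le> ennreal (3 powr p * (c0 powr p * (Kc j * C1) + A * (real DIM('a) * 2^j) powr (\<gamma> * p) + A))"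
proof -
  have [measurable]: "S j \<in> borel_measurable M" by (rule S_meas)
  have mX [measurable]: "X 0 (sp j 0) \<in> borel_measurable M" "X 0 x0 \<in> borel_measurable M" using meas T by auto
  have "(\<integral>\<^sup>+\<omega>. ennreal (V j \<omega> powr p) \<partial>M)
      \<le> (\<integral>\<^sup>+\<omega>. ennreal (3 powr p) * (ennreal (c0 powr p) * S j \<omega> + ennreal (\<bar>X 0 (sp j 0) \<omega> - X 0 x0 \<omega>\<bar> powr p)
           + ennreal (\<bar>X 0 x0 \<omega>\<bar> powr p)) \<partial>M)"
  proof (rule nn_integral_mono)
    fix \<omega>
    have O0: "0 \<le> Osc j \<omega>" using c0_nonneg by (simp add: Osc_eq)
    have "V j \<omega> powr p \<le> 3 powr p * (Osc j \<omega> powr p + \<bar>X 0 (sp j 0) \<omega> - X 0 x0 \<omega>\<bar> powr p + \<bar>X 0 x0 \<omega>\<bar> powr p)"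
      unfolding V_def by (rule powr_sum3[OF p_pos O0]) auto
    then have "ennreal (V j \<omega> powr p) \<le> ennreal (3 powr p) * (ennreal (Osc j \<omega> powr p) + ennreal (\<bar>X 0 (sp j 0) \<omega> - X 0 x0 \<omega>\<bar> powr p) + ennreal (\<bar>X 0 x0 \<omega>\<bar> powr p))"
      by (simp add: ennreal_mult[symmetric] ennreal_plus[symmetric] del: ennreal_plus)
    also have "ennreal (Osc j \<omega> powr p) \<le> ennreal (c0 powr p) * S j \<omega>"
    proof -
      have "ennreal (Osc j \<omega> powr p) = ennreal (c0 powr p) * ennreal (enn2real (S j \<omega>))"
        by (simp add: Osc_pow ennreal_mult)
      also have "ennreal (enn2real (S j \<omega>)) \<le> S j \<omega>" by (cases "S j \<omega> = \<top>") (auto simp: ennreal_enn2real_if)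
      finally show ?thesis by (simp add: mult_left_mono)
    qed
    finally show "ennreal (V j \<omega> powr p) \<le> ennreal (3 powr p) * (ennreal (c0 powr p) * S j \<omega> + ennreal (\<bar>X 0 (sp j 0) \<omega> - X 0 x0 \<omega>\<bar> powr p)
           + ennreal (\<bar>X 0 x0 \<omega>\<bar> powr p))" by (simp add: mult_left_mono add_right_mono)
  qed
  also have "\<dots> = ennreal (3 powr p) * (ennreal (c0 powr p) * (\<integral>\<^sup>+\<omega>. S j \<omega> \<partial>M) + (\<integral>\<^sup>+\<omega>. ennreal (\<bar>X 0 (sp j 0) \<omega> - X 0 x0 \<omega>\<bar> powr p) \<partial>M)
           + (\<integral>\<^sup>+\<omega>. ennreal (\<bar>X 0 x0 \<omega>\<bar> powr p) \<partial>M))"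
    by (simp add: nn_integral_cmult nn_integral_add)
  also have "\<dots> \<le> ennreal (3 powr p) * (ennreal (c0 powr p) * ennreal (Kc j * C1) + ennreal (A * norm (sp j 0 - x0) powr (\<gamma> * p))
           + ennreal A)"
    using S_int[of j] hx[rule_format, of 0 "sp j 0" x0] h0 T
    by (intro mult_left_mono add_mono) auto
  also have "\<dots> \<le> ennreal (3 powr p) * (ennreal (c0 powr p) * ennreal (Kc j * C1) + ennreal (A * (real DIM('a) * 2^j) powr (\<gamma> * p))
           + ennreal A)"
  proof -
    have "norm (sp j 0 - x0) powr (\<gamma> * p) \<le> (real DIM('a) * 2^j) powr (\<gamma> * p)"
      using Cb_norm[OF sp0_Cb] h\<gamma> p_pos by (intro powr_mono2) auto
    then have "A * norm (sp j 0 - x0) powr (\<gamma> * p) \<le> A * (real DIM('a) * 2^j) powr (\<gamma> * p)" using A by simp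
    then have e: "ennreal (A * norm (sp j 0 - x0) powr (\<gamma> * p)) \<le> ennreal (A * (real DIM('a) * 2^j) powr (\<gamma> * p))"
      by (rule ennreal_leI)
    show ?thesis by (rule mult_left_mono[OF add_right_mono[OF add_left_mono[OF e]]]) simp
  qed
  also have "\<dots> = ennreal (3 powr p * (c0 powr p * (Kc j * C1) + A * (real DIM('a) * 2^j) powr (\<gamma> * p) + A))"
    using A Kc_nonneg[of j] C1_pos
    by (simp add: ennreal_mult[symmetric] ennreal_plus[symmetric] del: ennreal_plus)
  finally show ?thesis .
qed

end


context kolm begin

lemma term_real:
  "Wt j powr (-p) * (3 powr p * (c0 powr p * (Kc j * C1) + A * (real DIM('a) * 2^j) powr (\<gamma> * p) + A))
     \<le> A * (3 powr p * Bc * 2 powr (\<theta> * p)) * rr^j"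
proof -
  define g where "g = 2 powr (real j * (\<gamma> * p))"
  have gp: "0 \<le> \<gamma> * p" using h\<gamma> p_pos by simp
  have g1: "1 \<le> g" unfolding g_def by (rule ge_one_powr_ge_zero) (use gp in auto)
  have kc: "Kc j = A * (2 powr (\<gamma> * p) * g + T powr (\<beta> * p))"
  proof -
    have "real (j+1) * \<gamma> * p = \<gamma> * p + real j * (\<gamma> * p)" by (simp add: algebra_simps)
    then show ?thesis by (simp add: Kc_def g_def powr_add del: of_nat_Suc)
  qed
  have dj: "(real DIM('a) * 2^j) powr (\<gamma> * p) = real DIM('a) powr (\<gamma> * p) * g"
  proof -
    have "((2::real)^j) powr (\<gamma> * p) = g"
      by (simp add: g_def powr_realpow[symmetric] powr_powr)
    then show ?thesis by (simp add: powr_mult)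
  qed
  have c0p: "0 \<le> c0 powr p" by simp
  have br: "c0 powr p * (Kc j * C1) + A * (real DIM('a) * 2^j) powr (\<gamma> * p) + A \<le> A * g * Bc"
  proof -
    have "c0 powr p * (Kc j * C1) = (c0 powr p * C1 * A) * (2 powr (\<gamma> * p) * g + T powr (\<beta> * p))"
      by (simp add: kc algebra_simps)
    also have "\<dots> \<le> (c0 powr p * C1 * A) * ((2 powr (\<gamma> * p) + T powr (\<beta> * p)) * g)"
    proof (rule mult_left_mono)
      have "T powr (\<beta> * p) \<le> T powr (\<beta> * p) * g" using g1 by (simp add: mult_le_cancel_left1)
      then show "2 powr (\<gamma> * p) * g + T powr (\<beta> * p) \<le> (2 powr (\<gamma> * p) + T powr (\<beta> * p)) * g"
        by (simp add: algebra_simps)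
      show "0 \<le> c0 powr p * C1 * A" using C1_pos A by simp
    qed
    finally have a1: "c0 powr p * (Kc j * C1) \<le> A * g * (c0 powr p * C1 * (2 powr (\<gamma> * p) + T powr (\<beta> * p)))"
      by (simp add: algebra_simps)
    have a2: "A * (real DIM('a) * 2^j) powr (\<gamma> * p) = A * g * real DIM('a) powr (\<gamma> * p)"
      by (simp add: dj algebra_simps)
    have a3: "A \<le> A * g * 1" using g1 A by (simp add: mult_le_cancel_left1)
    have "A * g * Bc = A * g * (c0 powr p * C1 * (2 powr (\<gamma> * p) + T powr (\<beta> * p))) + A * g * real DIM('a) powr (\<gamma> * p) + A * g * 1"
      by (simp add: Bc_def algebra_simps)
    then show ?thesis using a1 a2 a3 by linarith
  qed
  have wt: "Wt j powr (-p) = 2 powr (\<theta> * p) * 2 powr (- (real j * \<theta> * p))"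
  proof -
    have "Wt j powr (-p) = 2 powr ((real j - 1) * \<theta> * (-p))" by (simp add: Wt_def powr_powr)
    also have "(real j - 1) * \<theta> * (-p) = \<theta> * p + (- (real j * \<theta> * p))" by (simp add: algebra_simps)
    finally show ?thesis by (simp only: powr_add)
  qed
  have rj: "g * 2 powr (- (real j * \<theta> * p)) = rr^j"
  proof -
    have "g * 2 powr (- (real j * \<theta> * p)) = 2 powr (real j * (\<gamma> * p) + (- (real j * \<theta> * p)))"
      by (simp only: g_def powr_add)
    also have "real j * (\<gamma> * p) + (- (real j * \<theta> * p)) = (\<gamma> - \<theta>) * p * real j" by (simp add: algebra_simps)
    also have "2 powr ((\<gamma> - \<theta>) * p * real j) = rr^j"
      by (simp add: rr_def powr_powr[symmetric] powr_realpow)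
    finally show ?thesis .
  qed
  have W0: "0 \<le> Wt j powr (-p)" by simp
  have "Wt j powr (-p) * (3 powr p * (c0 powr p * (Kc j * C1) + A * (real DIM('a) * 2^j) powr (\<gamma> * p) + A))
      \<le> Wt j powr (-p) * (3 powr p * (A * g * Bc))"
    using br W0 by (intro mult_left_mono) auto
  also have "\<dots> = A * (3 powr p * Bc * 2 powr (\<theta> * p)) * (g * 2 powr (- (real j * \<theta> * p)))"
    by (simp add: wt algebra_simps)
  also have "\<dots> = A * (3 powr p * Bc * 2 powr (\<theta> * p)) * rr^j" by (simp add: rj)
  finally show ?thesis .
qed

end


context kolm begin

definition "G \<omega> = (\<Sum>j. ennreal ((V j \<omega> / Wt j) powr p))"

lemma G_meas: "G \<in> borel_measurable M"
proof -
  have [measurable]: "V j \<in> borel_measurable M" for j by (rule V_meas)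
  show ?thesis unfolding G_def[abs_def] by measurable
qed

lemma ratio_pow: "(V j \<omega> / Wt j) powr p = Wt j powr (-p) * V j \<omega> powr p"
proof -
  have "(V j \<omega> / Wt j) powr p = V j \<omega> powr p / Wt j powr p"
    using V_nonneg[of j \<omega>] Wt_pos[of j] by (simp add: powr_divide)
  also have "\<dots> = Wt j powr (-p) * V j \<omega> powr p" by (simp add: powr_minus divide_inverse mult.commute)
  finally show ?thesis .
qed

lemma int_G: "(\<integral>\<^sup>+\<omega>. G \<omega> \<partial>M) \<le> ennreal (A * Cst)"
proof -
  have [measurable]: "V j \<in> borel_measurable M" for j by (rule V_meas)
  have "(\<integral>\<^sup>+\<omega>. G \<omega> \<partial>M) = (\<Sum>j. \<integral>\<^sup>+\<omega>. ennreal ((V j \<omega> / Wt j) powr p) \<partial>M)"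
    unfolding G_def by (rule nn_integral_suminf) measurable
  also have "\<dots> \<le> (\<Sum>j. ennreal (A * (3 powr p * Bc * 2 powr (\<theta> * p)) * rr^j))"
  proof (intro suminf_le allI)
    fix j
    have "(\<integral>\<^sup>+\<omega>. ennreal ((V j \<omega> / Wt j) powr p) \<partial>M) = (\<integral>\<^sup>+\<omega>. ennreal (Wt j powr (-p)) * ennreal (V j \<omega> powr p) \<partial>M)"
      by (simp add: ratio_pow ennreal_mult)
    also have "\<dots> = ennreal (Wt j powr (-p)) * (\<integral>\<^sup>+\<omega>. ennreal (V j \<omega> powr p) \<partial>M)"
      by (rule nn_integral_cmult) measurable
    also have "\<dots> \<le> ennreal (Wt j powr (-p)) * ennreal (3 powr p * (c0 powr p * (Kc j * C1) + A * (real DIM('a) * 2^j) powr (\<gamma> * p) + A))"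
      by (rule mult_left_mono[OF int_Vp]) simp
    also have "\<dots> = ennreal (Wt j powr (-p) * (3 powr p * (c0 powr p * (Kc j * C1) + A * (real DIM('a) * 2^j) powr (\<gamma> * p) + A)))"
    proof -
      have "0 \<le> 3 powr p * (c0 powr p * (Kc j * C1) + A * (real DIM('a) * 2^j) powr (\<gamma> * p) + A)"
        using A Kc_nonneg[of j] C1_pos by (intro mult_nonneg_nonneg add_nonneg_nonneg) auto
      then show ?thesis by (intro ennreal_mult[symmetric]) auto
    qed
    also have "\<dots> \<le> ennreal (A * (3 powr p * Bc * 2 powr (\<theta> * p)) * rr^j)"
      by (rule ennreal_leI[OF term_real])
    finally show "(\<integral>\<^sup>+\<omega>. ennreal ((V j \<omega> / Wt j) powr p) \<partial>M) \<le> ennreal (A * (3 powr p * Bc * 2 powr (\<theta> * p)) * rr^j)" .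
  qed auto
  also have "\<dots> = ennreal (A * (3 powr p * Bc * 2 powr (\<theta> * p)) * (1 / (1 - rr)))"
  proof (rule suminf_ennreal_eq)
    show "0 \<le> A * (3 powr p * Bc * 2 powr (\<theta> * p)) * rr^j" for j using A Bc_pos rr by simp
    show "(\<lambda>j. A * (3 powr p * Bc * 2 powr (\<theta> * p)) * rr^j) sums (A * (3 powr p * Bc * 2 powr (\<theta> * p)) * (1 / (1 - rr)))"
      by (rule sums_mult) (rule geometric_sums, use rr in auto)
  qed
  also have "\<dots> = ennreal (A * Cst)" by (simp add: Cst_def)
  finally show ?thesis .
qed

lemma single_le_G: "ennreal ((V j \<omega> / Wt j) powr p) \<le> G \<omega>"
proof -
  have "(\<Sum>i\<in>{j}. ennreal ((V i \<omega> / Wt i) powr p)) \<le> (\<Sum>i. ennreal ((V i \<omega> / Wt i) powr p))"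
    by (rule sum_le_suminf) auto
  then show ?thesis by (simp add: G_def)
qed

lemma sup_le_G:
  "(SUP (t, x)\<in>{0..T} \<times> UNIV. ennreal ((\<bar>Y t x \<omega>\<bar> / (1 + norm (x - x0) powr \<theta>)) powr p)) \<le> G \<omega>"
proof (rule SUP_least)
  fix P assume P: "P \<in> {0..T} \<times> (UNIV :: 'a set)"
  obtain t x where Pe: "P = (t, x)" by (cases P)
  have t: "t \<in> {0..T}" using P Pe by auto
  have r0: "0 \<le> \<bar>Y t x \<omega>\<bar> / (1 + norm (x - x0) powr \<theta>)" by (simp add: add_pos_nonneg)
  have "(\<bar>Y t x \<omega>\<bar> / (1 + norm (x - x0) powr \<theta>)) powr p \<le> (V (Jx x) \<omega> / Wt (Jx x)) powr p"
    using ratio_le[OF t, of x \<omega>] r0 p_pos by (intro powr_mono2) (auto simp: wt_def)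
  then have "ennreal ((\<bar>Y t x \<omega>\<bar> / (1 + norm (x - x0) powr \<theta>)) powr p) \<le> ennreal ((V (Jx x) \<omega> / Wt (Jx x)) powr p)"
    by (rule ennreal_leI)
  also have "\<dots> \<le> G \<omega>" by (rule single_le_G)
  finally show "(\<lambda>(t, x). ennreal ((\<bar>Y t x \<omega>\<bar> / (1 + norm (x - x0) powr \<theta>)) powr p)) P \<le> G \<omega>" by (simp add: Pe)
qed

lemma sup_bound: "(\<integral>\<^sup>+ \<omega>. (SUP (t, x)\<in>{0..T} \<times> UNIV. ennreal ((\<bar>Y t x \<omega>\<bar> / (1 + norm (x - x0) powr \<theta>)) powr p)) \<partial>M)
    \<le> ennreal (Cst * A)"
proof -
  have "(\<integral>\<^sup>+ \<omega>. (SUP (t, x)\<in>{0..T} \<times> UNIV. ennreal ((\<bar>Y t x \<omega>\<bar> / (1 + norm (x - x0) powr \<theta>)) powr p)) \<partial>M)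
     \<le> (\<integral>\<^sup>+\<omega>. G \<omega> \<partial>M)" by (rule nn_integral_mono) (rule sup_le_G)
  also have "\<dots> \<le> ennreal (A * Cst)" by (rule int_G)
  finally show ?thesis by (simp add: mult.commute)
qed

lemma lim_at_inf:
  "AE \<omega> in M. ((\<lambda>x. SUP t\<in>{0..T}. \<bar>Y t x \<omega>\<bar> / (1 + norm (x - x0) powr \<theta>)) \<longlongrightarrow> 0) at_infinity"
proof -
  have "AE \<omega> in M. G \<omega> \<noteq> \<infinity>"
  proof (rule nn_integral_noteq_infinite[OF G_meas])
    show "integral\<^sup>N M G \<noteq> \<infinity>" using int_G by (auto simp: top_unique)
  qed
  then show ?thesis
  proof eventually_elim
    case (elim \<omega>)
    define a where "a j = (V j \<omega> / Wt j) powr p" for j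
    have a0: "0 \<le> a j" for j by (simp add: a_def)
    have "summable a" using elim unfolding G_def a_def[symmetric]
      by (intro summable_suminf_not_top) (auto simp: a0)
    then have a_lim: "a \<longlonglongrightarrow> 0" by (rule summable_LIMSEQ_zero)
    show ?case unfolding tendsto_iff
    proof (intro allI impI)
      fix e :: real assume e: "0 < e"
      have ep: "0 < e powr p" using e by simp
      obtain m where m: "\<And>j. j \<ge> m \<Longrightarrow> a j < e powr p"
        using order_tendstoD(2)[OF a_lim ep] by (auto simp: eventually_sequentially)
      show "\<forall>\<^sub>F x in at_infinity. dist (SUP t\<in>{0..T}. \<bar>Y t x \<omega>\<bar> / (1 + norm (x - x0) powr \<theta>)) 0 < e"
        unfolding eventually_at_infinity
      proof (intro exI[of _ "norm x0 + real DIM('a) * 2^m + 1"] allI impI)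
        fix x :: 'a assume nx: "norm x0 + real DIM('a) * 2^m + 1 \<le> norm x"
        have Jm: "m \<le> Jx x"
        proof (rule ccontr)
          assume "\<not> m \<le> Jx x"
          then have "x \<in> Cb m" using Jx_in[of x] Cb_mono[of "Jx x" m] by auto
          then have "norm (x - x0) \<le> real DIM('a) * 2^m" by (rule Cb_norm)
          moreover have "norm x \<le> norm (x - x0) + norm x0" using norm_triangle_ineq[of "x - x0" x0] by simp
          ultimately show False using nx by linarith
        qed
        define c where "c = V (Jx x) \<omega> / Wt (Jx x)"
        have c0: "0 \<le> c" unfolding c_def by (rule divide_nonneg_pos[OF V_nonneg Wt_pos])
        have ce: "c < e"
        proof (rule ccontr)
          assume "\<not> c < e"
          then have "e powr p \<le> c powr p" using e p_pos by (intro powr_mono2) auto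
          then show False using m[OF Jm] by (simp add: a_def c_def)
        qed
        have bnd: "\<bar>Y t x \<omega>\<bar> / (1 + norm (x - x0) powr \<theta>) \<le> c" if "t \<in> {0..T}" for t
          using ratio_le[OF that, of x \<omega>] by (simp add: c_def wt_def)
        have ne: "{0..T} \<noteq> {}" using T by simp
        have s1: "(SUP t\<in>{0..T}. \<bar>Y t x \<omega>\<bar> / (1 + norm (x - x0) powr \<theta>)) \<le> c"
          by (rule cSUP_least[OF ne bnd])
        have bdd: "bdd_above ((\<lambda>t. \<bar>Y t x \<omega>\<bar> / (1 + norm (x - x0) powr \<theta>)) ` {0..T})"
          by (rule bdd_aboveI2[where M=c]) (use bnd in auto)
        have s0: "\<bar>Y 0 x \<omega>\<bar> / (1 + norm (x - x0) powr \<theta>) \<le> (SUP t\<in>{0..T}. \<bar>Y t x \<omega>\<bar> / (1 + norm (x - x0) powr \<theta>))"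
          by (rule cSUP_upper[OF _ bdd]) (use T in auto)
        have "0 \<le> \<bar>Y 0 x \<omega>\<bar> / (1 + norm (x - x0) powr \<theta>)" by (simp add: add_pos_nonneg)
        then have sup0: "0 \<le> (SUP t\<in>{0..T}. \<bar>Y t x \<omega>\<bar> / (1 + norm (x - x0) powr \<theta>))" using s0 by linarith
        show "dist (SUP t\<in>{0..T}. \<bar>Y t x \<omega>\<bar> / (1 + norm (x - x0) powr \<theta>)) 0 < e"
          unfolding dist_real_def using sup0 s1 ce by simp
      qed
    qed
  qed
qed

theorem main_loc:
  "(\<forall>t\<in>{0..T}. \<forall>x. Y t x \<in> borel_measurable M) \<and>
   (\<forall>t\<in>{0..T}. \<forall>x. AE \<omega> in M. Y t x \<omega> = X t x \<omega>) \<and>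
   (\<forall>\<omega>\<in>space M. continuous_on ({0..T} \<times> UNIV) (\<lambda>(t, x). Y t x \<omega>)) \<and>
   (\<integral>\<^sup>+ \<omega>. (SUP (t, x)\<in>{0..T} \<times> UNIV. ennreal ((\<bar>Y t x \<omega>\<bar> / (1 + norm (x - x0) powr \<theta>)) powr p)) \<partial>M)
      \<le> ennreal (Cst * A) \<and>
   (AE \<omega> in M. ((\<lambda>x. SUP t\<in>{0..T}. \<bar>Y t x \<omega>\<bar> / (1 + norm (x - x0) powr \<theta>)) \<longlongrightarrow> 0) at_infinity)"
  using Y_meas Y_AE Y_cont sup_bound lim_at_inf by blast

end


definition Cglob :: "nat \<Rightarrow> real \<Rightarrow> real \<Rightarrow> real \<Rightarrow> real \<Rightarrow> real \<Rightarrow> real" where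
  "Cglob d p \<gamma> \<beta> \<theta> T = (let N = real d + 1; \<eta> = min (\<gamma> * p) (\<beta> * p); \<epsilon> = (\<eta> - N) / (2 * p);
     q = 2 powr (- \<epsilon>); c0 = 3 * (N / (1 - q)); C1 = N * 2 ^ (d + 1) / (1 - 2 powr (-(\<eta> - N)/2));
     B = c0 powr p * C1 * (2 powr (\<gamma> * p) + T powr (\<beta> * p)) + real d powr (\<gamma> * p) + 1;
     \<rho> = 2 powr ((\<gamma> - \<theta>) * p) in 3 powr p * B * 2 powr (\<theta> * p) / (1 - \<rho>))"

lemma Cglob_pos:
  fixes p \<gamma> \<beta> \<theta> T :: real
  assumes p: "p > 0" and eta: "min (\<gamma> * p) (\<beta> * p) > real d + 1" and th: "\<theta> > \<gamma>"
  shows "Cglob d p \<gamma> \<beta> \<theta> T > 0"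
proof -
  define N where "N = real d + 1"
  define \<eta> where "\<eta> = min (\<gamma> * p) (\<beta> * p)"
  define \<epsilon> where "\<epsilon> = (\<eta> - N) / (2 * p)"
  define q where "q = 2 powr (- \<epsilon>)"
  define c0 where "c0 = 3 * (N / (1 - q))"
  define C1 where "C1 = N * 2 ^ (d + 1) / (1 - 2 powr (-(\<eta> - N)/2))"
  define B where "B = c0 powr p * C1 * (2 powr (\<gamma> * p) + T powr (\<beta> * p)) + real d powr (\<gamma> * p) + 1"
  define \<rho> where "\<rho> = 2 powr ((\<gamma> - \<theta>) * p)"
  have eN: "\<eta> > N" using eta by (simp add: \<eta>_def N_def)
  have "\<epsilon> > 0" using eN p by (simp add: \<epsilon>_def)
  then have "2 powr (- \<epsilon>) < 2 powr (0::real)" by (intro powr_less_mono) auto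
  then have q1: "q < 1" by (simp add: q_def)
  have c0: "c0 \<ge> 0" using q1 by (simp add: c0_def N_def)
  have "2 powr (-(\<eta> - N)/2) < 2 powr (0::real)" using eN by (intro powr_less_mono) auto
  then have C1: "C1 > 0" by (simp add: C1_def N_def)
  have "0 \<le> c0 powr p * C1 * (2 powr (\<gamma> * p) + T powr (\<beta> * p))" using C1 by simp
  moreover have "0 \<le> real d powr (\<gamma> * p)" by simp
  ultimately have B: "B > 0" unfolding B_def by linarith
  have "(\<gamma> - \<theta>) * p < 0" using th p by (simp add: mult_neg_pos)
  then have "2 powr ((\<gamma> - \<theta>) * p) < 2 powr (0::real)" by (intro powr_less_mono) auto
  then have r: "\<rho> < 1" by (simp add: \<rho>_def)
  have "Cglob d p \<gamma> \<beta> \<theta> T = 3 powr p * B * 2 powr (\<theta> * p) / (1 - \<rho>)"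
    by (simp add: Cglob_def Let_def N_def \<eta>_def \<epsilon>_def q_def c0_def C1_def B_def \<rho>_def)
  then show ?thesis using B r by simp
qed

lemma (in kolm) Cst_eq: "Cst = Cglob DIM('a) p \<gamma> \<beta> \<theta> T"
proof -
  have D: "DIM('a \<times> real) = DIM('a) + 1" by simp
  show ?thesis
    unfolding Cst_def Cglob_def Let_def Bc_def c0_def C1_def qq_def eps_def eta_def rr_def Ne_eq D ..
qed

theorem mainTheorem5:
  fixes p \<gamma> \<beta> \<theta> T :: real
  assumes hp: "p > real DIM('a::euclidean_space) + 1"
    and h\<gamma>: "0 < \<gamma>" "\<gamma> < 1"
    and h\<beta>: "0 < \<beta>" "\<beta> < 1"
    and hp\<gamma>: "p * \<gamma> > real DIM('a) + 1"
    and hp\<beta>: "p * \<beta> > real DIM('a) + 1"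
    and h\<theta>: "\<theta> > p * \<gamma> / (p - (real DIM('a) + 1))"
    and hT: "T > 0"
  shows "\<exists>C>0. \<forall>(M :: 'b measure) (X :: real \<Rightarrow> 'a \<Rightarrow> 'b \<Rightarrow> real) (x0 :: 'a) (A :: real).
     prob_space M \<longrightarrow> A > 0 \<longrightarrow>
     (\<forall>t\<in>{0..T}. \<forall>x. X t x \<in> borel_measurable M) \<longrightarrow>
     (\<integral>\<^sup>+ \<omega>. ennreal (\<bar>X 0 x0 \<omega>\<bar> powr p) \<partial>M) \<le> ennreal A \<longrightarrow>
     (\<forall>t\<in>{0..T}. \<forall>x y. (\<integral>\<^sup>+ \<omega>. ennreal (\<bar>X t x \<omega> - X t y \<omega>\<bar> powr p) \<partial>M)
                        \<le> ennreal (A * norm (x - y) powr (\<gamma> * p))) \<longrightarrow>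
     (\<forall>t\<in>{0..T}. \<forall>s\<in>{0..T}. \<forall>x. (\<integral>\<^sup>+ \<omega>. ennreal (\<bar>X t x \<omega> - X s x \<omega>\<bar> powr p) \<partial>M)
                        \<le> ennreal (A * \<bar>t - s\<bar> powr (\<beta> * p))) \<longrightarrow>
     (\<exists>Y :: real \<Rightarrow> 'a \<Rightarrow> 'b \<Rightarrow> real.
        (\<forall>t\<in>{0..T}. \<forall>x. Y t x \<in> borel_measurable M) \<and>
        (\<forall>t\<in>{0..T}. \<forall>x. AE \<omega> in M. Y t x \<omega> = X t x \<omega>) \<and>
        (\<forall>\<omega>\<in>space M. continuous_on ({0..T} \<times> UNIV) (\<lambda>(t, x). Y t x \<omega>)) \<and>
        (\<integral>\<^sup>+ \<omega>. (SUP (t, x)\<in>{0..T} \<times> UNIV.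
              ennreal ((\<bar>Y t x \<omega>\<bar> / (1 + norm (x - x0) powr \<theta>)) powr p)) \<partial>M)
          \<le> ennreal (C * A) \<and>
        (AE \<omega> in M. ((\<lambda>x. SUP t\<in>{0..T}. \<bar>Y t x \<omega>\<bar> / (1 + norm (x - x0) powr \<theta>))
                        \<longlongrightarrow> 0) at_infinity))"
proof -
  define d where "d = DIM('a)"
  have pp: "p > 0" using hp by linarith
  have pN: "p - (real DIM('a) + 1) > 0" using hp by linarith
  have th: "\<theta> > \<gamma>"
  proof -
    have "\<gamma> * (p - (real DIM('a) + 1)) < \<gamma> * p" using h\<gamma> by simp
    then have "\<gamma> < p * \<gamma> / (p - (real DIM('a) + 1))" using pN by (simp add: field_simps)
    then show ?thesis using h\<theta> by linarith
  qed
  have eta: "min (\<gamma> * p) (\<beta> * p) > real DIM('a) + 1" using hp\<gamma> hp\<beta> by (simp add: mult.commute)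
  show ?thesis
  proof (intro exI[of _ "Cglob DIM('a) p \<gamma> \<beta> \<theta> T"] conjI allI impI)
    show "Cglob DIM('a) p \<gamma> \<beta> \<theta> T > 0" by (rule Cglob_pos[OF pp eta th])
  next
    fix M :: "'b measure" and X :: "real \<Rightarrow> 'a \<Rightarrow> 'b \<Rightarrow> real" and x0 :: 'a and A :: real
    assume a1: "prob_space M" and a2: "A > 0"
      and a3: "\<forall>t\<in>{0..T}. \<forall>x. X t x \<in> borel_measurable M"
      and a4: "(\<integral>\<^sup>+ \<omega>. ennreal (\<bar>X 0 x0 \<omega>\<bar> powr p) \<partial>M) \<le> ennreal A"
      and a5: "\<forall>t\<in>{0..T}. \<forall>x y. (\<integral>\<^sup>+ \<omega>. ennreal (\<bar>X t x \<omega> - X t y \<omega>\<bar> powr p) \<partial>M)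
                        \<le> ennreal (A * norm (x - y) powr (\<gamma> * p))"
      and a6: "\<forall>t\<in>{0..T}. \<forall>s\<in>{0..T}. \<forall>x. (\<integral>\<^sup>+ \<omega>. ennreal (\<bar>X t x \<omega> - X s x \<omega>\<bar> powr p) \<partial>M)
                        \<le> ennreal (A * \<bar>t - s\<bar> powr (\<beta> * p))"
    interpret K: kolm M X x0 A T p \<gamma> \<beta> \<theta>
      by (rule kolm.intro[OF a1 a2 hT hp h\<gamma>(1) h\<beta>(1) hp\<gamma> hp\<beta> th a3 a4 a5 a6])
    show "\<exists>Y :: real \<Rightarrow> 'a \<Rightarrow> 'b \<Rightarrow> real.
        (\<forall>t\<in>{0..T}. \<forall>x. Y t x \<in> borel_measurable M) \<and>
        (\<forall>t\<in>{0..T}. \<forall>x. AE \<omega> in M. Y t x \<omega> = X t x \<omega>) \<and>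
        (\<forall>\<omega>\<in>space M. continuous_on ({0..T} \<times> UNIV) (\<lambda>(t, x). Y t x \<omega>)) \<and>
        (\<integral>\<^sup>+ \<omega>. (SUP (t, x)\<in>{0..T} \<times> UNIV.
              ennreal ((\<bar>Y t x \<omega>\<bar> / (1 + norm (x - x0) powr \<theta>)) powr p)) \<partial>M)
          \<le> ennreal (Cglob DIM('a) p \<gamma> \<beta> \<theta> T * A) \<and>
        (AE \<omega> in M. ((\<lambda>x. SUP t\<in>{0..T}. \<bar>Y t x \<omega>\<bar> / (1 + norm (x - x0) powr \<theta>))
                        \<longlongrightarrow> 0) at_infinity)"
      using K.main_loc unfolding K.Cst_eq by blast
  qed
qed



end
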